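(* Let $\mathcal{S}$ be a relational schema and $\mathcal{D}$ a domain of atomic values (represented algebraically, types as sorts and predicates as equationally defined Boolean-valued operators), and assume that for each relational algebra expression $R$ over $\mathcal{S}$ and $\mathcal{D}$ the signature contains a fact constructor $\mathcal{R}_R:s_1\ldots s_n\to\mathsf{Fact}$, where $n$ is the arity of $R$ and $s_i$ is the sort of its $i$-th column. For a relational database instance $I$ over $\mathcal{S}$ let $\mathrm{Tr}_b(I)$ be the multiset of facts $\mathcal{R}_r(\vec t)$ over all relation symbols $r$ of $\mathcal{S}$ and all tuples $(\vec t)\in r^I$. Then for every relational algebra expression $R$ there exists a closed deterministic query $\mathrm{Tr}(R)$ such that for every relational database instance $I$ with schema $\mathcal{S}$ and every tuple $\vec t$: $$\exists F.\ \bigl(\mathrm{Init}_{\mathrm{Tr}(R)}(\mathrm{Tr}_b(I))\to^!\mathrm{Ans}(F\circ\mathcal{R}_R(\vec t))\bigr)\quad\text{iff}\quad(\vec t)\in\mathrm{Eval}_I(R),$$ where $\mathrm{Eval}_I(R)$ is the set of tuples obtained by evaluating $R$ on $I$.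
   Context: Relational algebra expressions are built from base relations of $\mathcal{S}$ with projection $\pi_{i_1,\dots,i_k}(R)$, selection $\sigma_\phi(R)$ (where $\phi$ is a Boolean term over placeholders $\$_1,\dots,\$_n$ for the columns of $R$), union $R\cup S$, Cartesian product $R\times S$ and difference $R\setminus S$, with the usual set semantics and positional attributes. Query language. Terms are over an order-sorted signature $\Sigma$ with sorts $\mathsf{Fact}$, $\mathsf{Bool}$, interpreted in an algebra presented by structural axioms $A$ and confluent terminating equations, with Boolean connectives and Boolean-valued equality; ground $\mathsf{Bool}$ terms reduce to $\mathsf{true}$ or $\mathsf{false}$. Multisets of facts: associative commutative $\circ$ with identity $\emptyset$. A terminating and preserving pattern $P$ is $[F_1]_!\circ[F_2]_?$ or $[F_2]_?$; $P_!,P_?$ are the wrapped multisets ($P_!=\emptyset$ if absent). Conditions: $\mathrm{False}$, $\{B\}$, $\neg\psi$, $\psi_1\vee\psi_2$, $\exists P.\psi$. Queries: $\emptyset$; facts $f$; $Q_1\oplus Q_2$; $\varphi\Rightarrow Q$; $\mathrm{From}\,P.Q$; quantifiers bind the variables of $P$ not bound by the context; a query is closed if all its variables are bound by enclosing patterns. Condition evaluation: frames $\mathrm{Res}(B)$, $\mathrm{Not}$, $[\vec a]^{\vec v}_\psi$, $[\vec a]^{\vec v,\downarrow}_\psi$, $[F'\mid\vec a]^{\vec v}_{\exists P.\psi}$ with $\sigma=\{\vec a/\vec v\}$, and rules ("$X\mapsto Y$" meaning $\{F,S\,X\}^c\to\{F,S\,Y\}^c$): $[\vec a]_{\mathrm{False}}\mapsto\mathrm{Res}(\mathsf{false})$;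 $[\vec a]_{\{B\}}\mapsto\mathrm{Res}(\sigma(B))$; $[\vec a]_{\neg\psi}\mapsto\mathrm{Not}[\vec a]_\psi$; $\mathrm{Not}\,\mathrm{Res}(B)\mapsto\mathrm{Res}(\neg B)$; $[\vec a]_{\psi_1\vee\psi_2}\mapsto[\vec a]^\downarrow_{\psi_1}[\vec a]_{\psi_2}$; $[\vec a]^\downarrow_\psi\mathrm{Res}(\mathsf{true})\mapsto\mathrm{Res}(\mathsf{true})$; $[\vec a]^\downarrow_\psi\mathrm{Res}(\mathsf{false})\mapsto[\vec a]_\psi$; $[\vec a]_{\exists P.\psi}\mapsto[F\mid\vec a]_{\exists P.\psi}$; if $\vec w$ lists the variables of $P$ not in $\vec v$, $\sigma'=\{\vec a/\vec v,\vec b/\vec w\}$, $F'=F''\circ\sigma'(P_!\circ P_?)$: $[F'\mid\vec a]_{\exists P.\psi}\mapsto[F''\circ\sigma'(P_!)\mid\vec a]_{\exists P.\psi}[\vec a,\vec b]^{\vec v,\vec w}_\psi$; $[F'\mid\vec a]_{\exists P.\psi}\mathrm{Res}(\mathsf{false})\mapsto[F'\mid\vec a]_{\exists P.\psi}$; $[F'\mid\vec a]_{\exists P.\psi}\mathrm{Res}(\mathsf{true})\mapsto\mathrm{Res}(\mathsf{true})$; if no matching exists, $[F'\mid\vec a]_{\exists P.\psi}\mapsto\mathrm{Res}(\mathsf{false})$. Query evaluation: states $\{F,F',S\}^q$ ($F$ database, $F'$ partial answer), terminal $\mathrm{Ans}(F')$; with "$X\mapsto Y$" meaning $\{F,F',S\,X\}^q\to\{F,F',S\,Y\}^q$: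 $\{F,F',S[\vec a]_f\}^q\to\{F,F'\circ\sigma(f),S\}^q$; $[\vec a]_\emptyset\mapsto$ (nothing); $[\vec a]_{R_1\oplus R_2}\mapsto[\vec a]_{R_2}[\vec a]_{R_1}$; $[\vec a]_{\varphi\Rightarrow R}\mapsto[\vec a\mid[\vec a]^{\vec v}_\varphi]_R$; $[\vec a\mid\mathrm{Res}(\mathsf{false})]_R\mapsto$ (nothing); $[\vec a\mid\mathrm{Res}(\mathsf{true})]_R\mapsto[\vec a]_R$; for each condition rule $\{F,S'\}^c\to\{F,S''\}^c$, $[\vec a\mid S']_R\mapsto[\vec a\mid S'']_R$; $[\vec a]_{\mathrm{From}\,P.R}\mapsto[F\mid\vec a]_{\mathrm{From}\,P.R}$; if $F''=H\circ\sigma'(P_!\circ P_?)$ then $[F''\mid\vec a]_{\mathrm{From}\,P.R}\mapsto[H\circ\sigma'(P_!)\mid\vec a]_{\mathrm{From}\,P.R}[\vec a,\vec b]^{\vec v,\vec w}_R$; if no matching exists, $[F''\mid\vec a]_{\mathrm{From}\,P.R}\mapsto$ (nothing); $\{F,F',\text{empty}\}^q\to\mathrm{Ans}(F')$. $\mathrm{Init}_Q(F):=\{F,\emptyset,[\,]_Q\}^q$; $t\to^!t'$ means $t\to^*t'$ with $t'$ irreducible. A fully reduced fact term $t$ has the unique matching property if for every ground fully reduced fact $t'$ there is at most one substitution $\sigma$ with $\sigma(t)=t'$; a query is deterministic if all its quantification patterns (including those inside conditions) consist of a single fact with the unique matching property. *)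

theory Defs
  imports Main "HOL-Library.Multiset"
begin

text \<open>Value terms over variables (nat), constants of the domain 'v and
  domain operators 'g; Boolean terms with connectives, Boolean-valued
  equality and domain predicates 'p.  The algebra is given semantically by
  interpretations fi (operators) and pi (predicates); ground Bool terms
  therefore evaluate to true or false.\<close>

datatype ('g,'v) vt = Var nat | Const 'v | Fn 'g "('g,'v) vt list"

datatype ('g,'p,'v) bexp = BTrue | BFalse | BNot "('g,'p,'v) bexp"
  | BAnd "('g,'p,'v) bexp" "('g,'p,'v) bexp" | BOr "('g,'p,'v) bexp" "('g,'p,'v) bexp"
  | BEq "('g,'v) vt" "('g,'v) vt" | BPred 'p "('g,'v) vt list"

type_synonym 'v env = "nat \<Rightarrow> 'v option"

fun evalv :: "('g \<Rightarrow> 'v list \<Rightarrow> 'v) \<Rightarrow> 'v env \<Rightarrow> ('g,'v) vt \<Rightarrow> 'v" where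
  "evalv fi e (Var x) = (case e x of Some v \<Rightarrow> v | None \<Rightarrow> undefined)"
| "evalv fi e (Const c) = c"
| "evalv fi e (Fn g ts) = fi g (map (evalv fi e) ts)"

fun evalb :: "('g \<Rightarrow> 'v list \<Rightarrow> 'v) \<Rightarrow> ('p \<Rightarrow> 'v list \<Rightarrow> bool) \<Rightarrow> 'v env
    \<Rightarrow> ('g,'p,'v) bexp \<Rightarrow> bool" where
  "evalb fi pi e BTrue = True"
| "evalb fi pi e BFalse = False"
| "evalb fi pi e (BNot b) = (\<not> evalb fi pi e b)"
| "evalb fi pi e (BAnd b c) = (evalb fi pi e b \<and> evalb fi pi e c)"
| "evalb fi pi e (BOr b c) = (evalb fi pi e b \<or> evalb fi pi e c)"
| "evalb fi pi e (BEq s t) = (evalv fi e s = evalv fi e t)"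
| "evalb fi pi e (BPred p ts) = pi p (map (evalv fi e) ts)"

fun fvv :: "('g,'v) vt \<Rightarrow> nat set" where
  "fvv (Var x) = {x}"
| "fvv (Const c) = {}"
| "fvv (Fn g ts) = (\<Union>t\<in>set ts. fvv t)"

fun fvb :: "('g,'p,'v) bexp \<Rightarrow> nat set" where
  "fvb BTrue = {}"
| "fvb BFalse = {}"
| "fvb (BNot b) = fvb b"
| "fvb (BAnd b c) = fvb b \<union> fvb c"
| "fvb (BOr b c) = fvb b \<union> fvb c"
| "fvb (BEq s t) = fvv s \<union> fvv t"
| "fvb (BPred p ts) = (\<Union>t\<in>set ts. fvv t)"

section \<open>Relational algebra (positional, 1-based columns, set semantics)\<close>

datatype ('r,'g,'p,'v) ra = Rel 'r
  | Proj "nat list" "('r,'g,'p,'v) ra"          \<comment> \<open>\<pi>_{i1..ik}, indices 1-based\<close>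
  | Sel "('g,'p,'v) bexp" "('r,'g,'p,'v) ra"     \<comment> \<open>placeholder $i is Var i\<close>
  | Union "('r,'g,'p,'v) ra" "('r,'g,'p,'v) ra"
  | Prod "('r,'g,'p,'v) ra" "('r,'g,'p,'v) ra"
  | Diff "('r,'g,'p,'v) ra" "('r,'g,'p,'v) ra"

fun arity :: "('r \<Rightarrow> nat) \<Rightarrow> ('r,'g,'p,'v) ra \<Rightarrow> nat" where
  "arity ar (Rel r) = ar r"
| "arity ar (Proj is R) = length is"
| "arity ar (Sel \<phi> R) = arity ar R"
| "arity ar (Union R1 R2) = arity ar R1"
| "arity ar (Prod R1 R2) = arity ar R1 + arity ar R2"
| "arity ar (Diff R1 R2) = arity ar R1"

fun wf_ra :: "'r set \<Rightarrow> ('r \<Rightarrow> nat) \<Rightarrow> ('r,'g,'p,'v) ra \<Rightarrow> bool" where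
  "wf_ra S ar (Rel r) = (r \<in> S)"
| "wf_ra S ar (Proj is R) = (wf_ra S ar R \<and> (\<forall>i\<in>set is. 1 \<le> i \<and> i \<le> arity ar R))"
| "wf_ra S ar (Sel \<phi> R) = (wf_ra S ar R \<and> fvb \<phi> \<subseteq> {1..arity ar R})"
| "wf_ra S ar (Union R1 R2) = (wf_ra S ar R1 \<and> wf_ra S ar R2 \<and> arity ar R1 = arity ar R2)"
| "wf_ra S ar (Prod R1 R2) = (wf_ra S ar R1 \<and> wf_ra S ar R2)"
| "wf_ra S ar (Diff R1 R2) = (wf_ra S ar R1 \<and> wf_ra S ar R2 \<and> arity ar R1 = arity ar R2)"

definition tuple_env :: "'v list \<Rightarrow> 'v env" where
  "tuple_env t = (\<lambda>i. if 1 \<le> i \<and> i \<le> length t then Some (t ! (i - 1)) else None)"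

fun eval_ra :: "('g \<Rightarrow> 'v list \<Rightarrow> 'v) \<Rightarrow> ('p \<Rightarrow> 'v list \<Rightarrow> bool) \<Rightarrow> ('r \<Rightarrow> 'v list set)
    \<Rightarrow> ('r,'g,'p,'v) ra \<Rightarrow> 'v list set" where
  "eval_ra fi pi I (Rel r) = I r"
| "eval_ra fi pi I (Proj is R) = (\<lambda>t. map (\<lambda>i. t ! (i - 1)) is) ` eval_ra fi pi I R"
| "eval_ra fi pi I (Sel \<phi> R) = {t \<in> eval_ra fi pi I R. evalb fi pi (tuple_env t) \<phi>}"
| "eval_ra fi pi I (Union R1 R2) = eval_ra fi pi I R1 \<union> eval_ra fi pi I R2"
| "eval_ra fi pi I (Prod R1 R2) = {t @ u | t u. t \<in> eval_ra fi pi I R1 \<and> u \<in> eval_ra fi pi I R2}"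
| "eval_ra fi pi I (Diff R1 R2) = eval_ra fi pi I R1 - eval_ra fi pi I R2"

definition db_instance :: "'r set \<Rightarrow> ('r \<Rightarrow> nat) \<Rightarrow> ('r \<Rightarrow> 'v list set) \<Rightarrow> bool" where
  "db_instance S ar I = (\<forall>r\<in>S. finite (I r) \<and> (\<forall>t\<in>I r. length t = ar r))"

section \<open>Facts: one fact constructor R_R per RA expression R\<close>

datatype ('r,'g,'p,'v) gfact = GF "('r,'g,'p,'v) ra" "'v list"
datatype ('r,'g,'p,'v) fterm = FT "('r,'g,'p,'v) ra" "('g,'v) vt list"

fun inst :: "('g \<Rightarrow> 'v list \<Rightarrow> 'v) \<Rightarrow> 'v env \<Rightarrow> ('r,'g,'p,'v) fterm \<Rightarrow> ('r,'g,'p,'v) gfact" where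
  "inst fi e (FT R ts) = GF R (map (evalv fi e) ts)"

fun fvf :: "('r,'g,'p,'v) fterm \<Rightarrow> nat set" where
  "fvf (FT R ts) = (\<Union>t\<in>set ts. fvv t)"

definition trb :: "'r set \<Rightarrow> ('r \<Rightarrow> 'v list set) \<Rightarrow> ('r,'g,'p,'v) gfact multiset" where
  "trb S I = (\<Sum>r\<in>S. image_mset (GF (Rel r)) (mset_set (I r)))"

text \<open>A pattern is the pair (P_!, P_?) of wrapped multisets (P_! empty if absent).\<close>
type_synonym ('r,'g,'p,'v) pat = "('r,'g,'p,'v) fterm multiset \<times> ('r,'g,'p,'v) fterm multiset"

definition pvars :: "('r,'g,'p,'v) pat \<Rightarrow> nat set" where
  "pvars P = (\<Union>f\<in>set_mset (fst P + snd P). fvf f)"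

datatype ('r,'g,'p,'v) cond = CFalse | CB "('g,'p,'v) bexp" | CNot "('r,'g,'p,'v) cond"
  | COr "('r,'g,'p,'v) cond" "('r,'g,'p,'v) cond"
  | CEx "('r,'g,'p,'v) pat" "('r,'g,'p,'v) cond"

datatype ('r,'g,'p,'v) query = QEmpty | QFact "('r,'g,'p,'v) fterm"
  | QPlus "('r,'g,'p,'v) query" "('r,'g,'p,'v) query"
  | QImp "('r,'g,'p,'v) cond" "('r,'g,'p,'v) query"
  | QFrom "('r,'g,'p,'v) pat" "('r,'g,'p,'v) query"

fun closed_c :: "nat set \<Rightarrow> ('r,'g,'p,'v) cond \<Rightarrow> bool" where
  "closed_c B CFalse = True"
| "closed_c B (CB b) = (fvb b \<subseteq> B)"
| "closed_c B (CNot \<psi>) = closed_c B \<psi>"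
| "closed_c B (COr \<psi>1 \<psi>2) = (closed_c B \<psi>1 \<and> closed_c B \<psi>2)"
| "closed_c B (CEx P \<psi>) = closed_c (B \<union> pvars P) \<psi>"

fun closed_q :: "nat set \<Rightarrow> ('r,'g,'p,'v) query \<Rightarrow> bool" where
  "closed_q B QEmpty = True"
| "closed_q B (QFact f) = (fvf f \<subseteq> B)"
| "closed_q B (QPlus Q1 Q2) = (closed_q B Q1 \<and> closed_q B Q2)"
| "closed_q B (QImp \<phi> Q) = (closed_c B \<phi> \<and> closed_q B Q)"
| "closed_q B (QFrom P Q) = closed_q (B \<union> pvars P) Q"

definition closed_query :: "('r,'g,'p,'v) query \<Rightarrow> bool" where
  "closed_query Q = closed_q {} Q"

definition unique_matching :: "('g \<Rightarrow> 'v list \<Rightarrow> 'v) \<Rightarrow> ('r,'g,'p,'v) fterm \<Rightarrow> bool" where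
  "unique_matching fi t = (\<forall>t' \<sigma>1 \<sigma>2. dom \<sigma>1 = fvf t \<longrightarrow> dom \<sigma>2 = fvf t \<longrightarrow>
      inst fi \<sigma>1 t = t' \<longrightarrow> inst fi \<sigma>2 t = t' \<longrightarrow> \<sigma>1 = \<sigma>2)"

definition det_pat :: "('g \<Rightarrow> 'v list \<Rightarrow> 'v) \<Rightarrow> ('r,'g,'p,'v) pat \<Rightarrow> bool" where
  "det_pat fi P = (\<exists>f. P = ({#}, {#f#}) \<and> unique_matching fi f)"

fun det_c :: "('g \<Rightarrow> 'v list \<Rightarrow> 'v) \<Rightarrow> ('r,'g,'p,'v) cond \<Rightarrow> bool" where
  "det_c fi CFalse = True"
| "det_c fi (CB b) = True"
| "det_c fi (CNot \<psi>) = det_c fi \<psi>"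
| "det_c fi (COr \<psi>1 \<psi>2) = (det_c fi \<psi>1 \<and> det_c fi \<psi>2)"
| "det_c fi (CEx P \<psi>) = (det_pat fi P \<and> det_c fi \<psi>)"

fun det_q :: "('g \<Rightarrow> 'v list \<Rightarrow> 'v) \<Rightarrow> ('r,'g,'p,'v) query \<Rightarrow> bool" where
  "det_q fi QEmpty = True"
| "det_q fi (QFact f) = True"
| "det_q fi (QPlus Q1 Q2) = (det_q fi Q1 \<and> det_q fi Q2)"
| "det_q fi (QImp \<phi> Q) = (det_c fi \<phi> \<and> det_q fi Q)"
| "det_q fi (QFrom P Q) = (det_pat fi P \<and> det_q fi Q)"

section \<open>Operational semantics (stacks are lists with the TOP at the head)\<close>

definition match :: "('g \<Rightarrow> 'v list \<Rightarrow> 'v) \<Rightarrow> 'v env \<Rightarrow> ('r,'g,'p,'v) pat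
    \<Rightarrow> ('r,'g,'p,'v) gfact multiset \<Rightarrow> ('r,'g,'p,'v) gfact multiset \<Rightarrow> 'v env \<Rightarrow> bool" where
  "match fi a P F H e' = (a \<subseteq>\<^sub>m e' \<and> dom e' = dom a \<union> pvars P \<and>
      F = H + image_mset (inst fi e') (fst P + snd P))"

datatype ('r,'g,'p,'v) cframe = Res bool | NotF
  | CEv "'v env" "('r,'g,'p,'v) cond"
  | CDown "'v env" "('r,'g,'p,'v) cond"
  | CExF "('r,'g,'p,'v) gfact multiset" "'v env" "('r,'g,'p,'v) pat" "('r,'g,'p,'v) cond"

inductive cstep :: "('g \<Rightarrow> 'v list \<Rightarrow> 'v) \<Rightarrow> ('p \<Rightarrow> 'v list \<Rightarrow> bool)
    \<Rightarrow> ('r,'g,'p,'v) gfact multiset \<Rightarrow> ('r,'g,'p,'v) cframe list \<Rightarrow> ('r,'g,'p,'v) cframe list \<Rightarrow> bool"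
  for fi pi where
  c_false: "cstep fi pi F (CEv a CFalse # S) (Res False # S)"
| c_bool: "cstep fi pi F (CEv a (CB B) # S) (Res (evalb fi pi a B) # S)"
| c_not: "cstep fi pi F (CEv a (CNot \<psi>) # S) (CEv a \<psi> # NotF # S)"
| c_notres: "cstep fi pi F (Res b # NotF # S) (Res (\<not> b) # S)"
| c_or: "cstep fi pi F (CEv a (COr \<psi>1 \<psi>2) # S) (CEv a \<psi>2 # CDown a \<psi>1 # S)"
| c_down_true: "cstep fi pi F (Res True # CDown a \<psi> # S) (Res True # S)"
| c_down_false: "cstep fi pi F (Res False # CDown a \<psi> # S) (CEv a \<psi> # S)"
| c_ex: "cstep fi pi F (CEv a (CEx P \<psi>) # S) (CExF F a P \<psi> # S)"
| c_ex_match: "match fi a P F' H e' \<Longrightarrow>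
    cstep fi pi F (CExF F' a P \<psi> # S)
      (CEv e' \<psi> # CExF (H + image_mset (inst fi e') (fst P)) a P \<psi> # S)"
| c_ex_false: "cstep fi pi F (Res False # CExF F' a P \<psi> # S) (CExF F' a P \<psi> # S)"
| c_ex_true: "cstep fi pi F (Res True # CExF F' a P \<psi> # S) (Res True # S)"
| c_ex_none: "\<not> (\<exists>H e'. match fi a P F' H e') \<Longrightarrow>
    cstep fi pi F (CExF F' a P \<psi> # S) (Res False # S)"

datatype ('r,'g,'p,'v) qframe =
    QEv "'v env" "('r,'g,'p,'v) query"
  | QCondF "'v env" "('r,'g,'p,'v) cframe list" "('r,'g,'p,'v) query"
  | QFromF "('r,'g,'p,'v) gfact multiset" "'v env" "('r,'g,'p,'v) pat" "('r,'g,'p,'v) query"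

datatype ('r,'g,'p,'v) qstate =
    QS "('r,'g,'p,'v) gfact multiset" "('r,'g,'p,'v) gfact multiset" "('r,'g,'p,'v) qframe list"
  | Ans "('r,'g,'p,'v) gfact multiset"

inductive qstep :: "('g \<Rightarrow> 'v list \<Rightarrow> 'v) \<Rightarrow> ('p \<Rightarrow> 'v list \<Rightarrow> bool)
    \<Rightarrow> ('r,'g,'p,'v) qstate \<Rightarrow> ('r,'g,'p,'v) qstate \<Rightarrow> bool"
  for fi pi where
  q_fact: "qstep fi pi (QS F F' (QEv a (QFact f) # S)) (QS F (F' + {#inst fi a f#}) S)"
| q_empty: "qstep fi pi (QS F F' (QEv a QEmpty # S)) (QS F F' S)"
| q_plus: "qstep fi pi (QS F F' (QEv a (QPlus R1 R2) # S)) (QS F F' (QEv a R1 # QEv a R2 # S))"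
| q_imp: "qstep fi pi (QS F F' (QEv a (QImp \<phi> R) # S)) (QS F F' (QCondF a [CEv a \<phi>] R # S))"
| q_cond_false: "qstep fi pi (QS F F' (QCondF a [Res False] R # S)) (QS F F' S)"
| q_cond_true: "qstep fi pi (QS F F' (QCondF a [Res True] R # S)) (QS F F' (QEv a R # S))"
| q_cond_step: "cstep fi pi F S1 S2 \<Longrightarrow>
    qstep fi pi (QS F F' (QCondF a S1 R # S)) (QS F F' (QCondF a S2 R # S))"
| q_from: "qstep fi pi (QS F F' (QEv a (QFrom P R) # S)) (QS F F' (QFromF F a P R # S))"
| q_from_match: "match fi a P F'' H e' \<Longrightarrow>
    qstep fi pi (QS F F' (QFromF F'' a P R # S))
      (QS F F' (QEv e' R # QFromF (H + image_mset (inst fi e') (fst P)) a P R # S))"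
| q_from_none: "\<not> (\<exists>H e'. match fi a P F'' H e') \<Longrightarrow>
    qstep fi pi (QS F F' (QFromF F'' a P R # S)) (QS F F' S)"
| q_done: "qstep fi pi (QS F F' []) (Ans F')"

definition init_q :: "('r,'g,'p,'v) query \<Rightarrow> ('r,'g,'p,'v) gfact multiset \<Rightarrow> ('r,'g,'p,'v) qstate" where
  "init_q Q F = QS F {#} [QEv Map.empty Q]"

definition reduces_nf :: "('g \<Rightarrow> 'v list \<Rightarrow> 'v) \<Rightarrow> ('p \<Rightarrow> 'v list \<Rightarrow> bool)
    \<Rightarrow> ('r,'g,'p,'v) qstate \<Rightarrow> ('r,'g,'p,'v) qstate \<Rightarrow> bool" where
  "reduces_nf fi pi s t = ((qstep fi pi)\<^sup>*\<^sup>* s t \<and> \<not> (\<exists>u. qstep fi pi t u))"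

end

theory Submission
  imports Defs
begin

lemma evalv_cong: "(\<forall>x\<in>fvv t. e1 x = e2 x) \<Longrightarrow> evalv fi e1 t = evalv fi e2 t"
  by (induction fi e1 t rule: evalv.induct) (auto cong: map_cong)

lemma evalb_cong: "(\<forall>x\<in>fvb b. e1 x = e2 x) \<Longrightarrow> evalb fi pi e1 b = evalb fi pi e2 b"
proof (induction b)
  case (BEq s t) then show ?case using evalv_cong[of s e1 e2 fi] evalv_cong[of t e1 e2 fi] by simp
next
  case (BPred p ts)
  then have "\<forall>t\<in>set ts. evalv fi e1 t = evalv fi e2 t"
    by (auto intro!: evalv_cong)
  then show ?case by (metis evalb.simps(7) map_eq_conv)
qed auto

lemma inst_cong: "(\<forall>x\<in>fvf f. e1 x = e2 x) \<Longrightarrow> inst fi e1 f = inst fi e2 f"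
  by (cases f) (auto intro!: map_cong evalv_cong)

lemma det_patE:
  assumes "det_pat fi P"
  obtains f where "P = ({#}, {#f#})" "unique_matching fi f"
  using assms unfolding det_pat_def by blast

lemma match_unique:
  assumes P: "P = ({#}, {#f#})" and u: "unique_matching fi f"
    and m1: "match fi a P F1 H1 e1" and m2: "match fi a P F2 H2 e2"
    and eq: "inst fi e1 f = inst fi e2 f"
  shows "e1 = e2"
proof -
  have pv: "pvars P = fvf f" using P by (simp add: pvars_def)
  have d1: "dom e1 = dom a \<union> fvf f" and d2: "dom e2 = dom a \<union> fvf f"
    using m1 m2 pv by (auto simp: match_def)
  have l1: "a \<subseteq>\<^sub>m e1" and l2: "a \<subseteq>\<^sub>m e2" using m1 m2 by (auto simp: match_def)
  define s1 where "s1 = e1 |` fvf f"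
  define s2 where "s2 = e2 |` fvf f"
  have "dom s1 = fvf f" "dom s2 = fvf f" using d1 d2 by (auto simp: s1_def s2_def)
  moreover have "inst fi s1 f = inst fi e1 f" "inst fi s2 f = inst fi e2 f"
    by (auto simp: s1_def s2_def intro!: inst_cong)
  ultimately have "s1 = s2" using u eq unfolding unique_matching_def by metis
  show ?thesis
  proof
    fix x
    show "e1 x = e2 x"
    proof (cases "x \<in> fvf f")
      case True
      then show ?thesis using \<open>s1 = s2\<close> by (metis restrict_map_def s1_def s2_def)
    next
      case False
      show ?thesis
      proof (cases "x \<in> dom a")
        case True
        then show ?thesis using l1 l2 by (metis domD map_le_def)
      next
        case f2: False
        then have "x \<notin> dom e1" "x \<notin> dom e2" using False d1 d2 by auto
        then show ?thesis by (simp add: domIff)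
      qed
    qed
  qed
qed

lemma match_sub:
  assumes "match fi a P (H + X) H2 e2"
  shows "match fi a P (H + X + Z) (H2 + Z) e2"
  using assms by (auto simp: match_def ac_simps)

lemma match_split:
  assumes P: "P = ({#}, {#f#})" and u: "unique_matching fi f"
    and m1: "match fi a P F H e1" and m2: "match fi a P F H2 e2"
  shows "e2 = e1 \<or> (\<exists>H3. match fi a P H H3 e2)"
proof (cases "inst fi e2 f = inst fi e1 f")
  case True
  then show ?thesis using match_unique[OF P u m2 m1] by blast
next
  case False
  have F1: "F = H + {#inst fi e1 f#}" and F2: "F = H2 + {#inst fi e2 f#}"
    using m1 m2 P by (auto simp: match_def)
  then have "inst fi e2 f \<in># H" using False
    by (metis add_mset_add_single insert_noteq_member)
  then have "H = (H - {#inst fi e2 f#}) + {#inst fi e2 f#}" by simp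
  then have "match fi a P H (H - {#inst fi e2 f#}) e2"
    using m2 P by (auto simp: match_def)
  then show ?thesis by blast
qed

section \<open>Condition semantics\<close>

fun csem :: "('g \<Rightarrow> 'v list \<Rightarrow> 'v) \<Rightarrow> ('p \<Rightarrow> 'v list \<Rightarrow> bool) \<Rightarrow> ('r,'g,'p,'v) gfact multiset
   \<Rightarrow> 'v env \<Rightarrow> ('r,'g,'p,'v) cond \<Rightarrow> bool" where
  "csem fi pi F a CFalse = False"
| "csem fi pi F a (CB b) = evalb fi pi a b"
| "csem fi pi F a (CNot \<psi>) = (\<not> csem fi pi F a \<psi>)"
| "csem fi pi F a (COr \<psi>1 \<psi>2) = (csem fi pi F a \<psi>1 \<or> csem fi pi F a \<psi>2)"
| "csem fi pi F a (CEx P \<psi>) = (\<exists>H e'. match fi a P F H e' \<and> csem fi pi F e' \<psi>)"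

definition exsem where
  "exsem fi pi F F' a P \<psi> = (\<exists>H e'. match fi a P F' H e' \<and> csem fi pi F e' \<psi>)"

lemma exsem_split:
  assumes "det_pat fi P" and m: "match fi a P F' H e'"
  shows "exsem fi pi F F' a P \<psi> = (csem fi pi F e' \<psi> \<or> exsem fi pi F H a P \<psi>)"
proof -
  obtain f where P: "P = ({#}, {#f#})" and u: "unique_matching fi f"
    using assms(1) by (rule det_patE)
  have F': "F' = H + {#inst fi e' f#}" using m P by (simp add: match_def)
  show ?thesis
  proof
    assume "exsem fi pi F F' a P \<psi>"
    then obtain H2 e2 where m2: "match fi a P F' H2 e2" and c: "csem fi pi F e2 \<psi>"
      unfolding exsem_def by blast
    from match_split[OF P u m m2] c show "csem fi pi F e' \<psi> \<or> exsem fi pi F H a P \<psi>"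
      unfolding exsem_def by blast
  next
    assume "csem fi pi F e' \<psi> \<or> exsem fi pi F H a P \<psi>"
    then show "exsem fi pi F F' a P \<psi>"
    proof
      assume "csem fi pi F e' \<psi>" then show ?thesis using m unfolding exsem_def by blast
    next
      assume "exsem fi pi F H a P \<psi>"
      then obtain H2 e2 where m2: "match fi a P H H2 e2" and c: "csem fi pi F e2 \<psi>"
        unfolding exsem_def by blast
      have "match fi a P (H + {#} + {#inst fi e' f#}) (H2 + {#inst fi e' f#}) e2"
        by (rule match_sub) (use m2 in simp)
      then show ?thesis using c F' unfolding exsem_def by auto
    qed
  qed
qed

fun cont :: "('g \<Rightarrow> 'v list \<Rightarrow> 'v) \<Rightarrow> ('p \<Rightarrow> 'v list \<Rightarrow> bool) \<Rightarrow> ('r,'g,'p,'v) gfact multiset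
   \<Rightarrow> ('r,'g,'p,'v) cframe list \<Rightarrow> bool \<Rightarrow> bool" where
  "cont fi pi F [] b = b"
| "cont fi pi F (NotF # S) b = cont fi pi F S (\<not> b)"
| "cont fi pi F (CDown a \<psi> # S) b = cont fi pi F S (b \<or> csem fi pi F a \<psi>)"
| "cont fi pi F (CExF F' a P \<psi> # S) b = cont fi pi F S (b \<or> exsem fi pi F F' a P \<psi>)"
| "cont fi pi F (Res c # S) b = cont fi pi F S b"
| "cont fi pi F (CEv a \<psi> # S) b = cont fi pi F S b"

fun cval :: "('g \<Rightarrow> 'v list \<Rightarrow> 'v) \<Rightarrow> ('p \<Rightarrow> 'v list \<Rightarrow> bool) \<Rightarrow> ('r,'g,'p,'v) gfact multiset
   \<Rightarrow> ('r,'g,'p,'v) cframe list \<Rightarrow> bool" where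
  "cval fi pi F (Res b # S) = cont fi pi F S b"
| "cval fi pi F (CEv a \<psi> # S) = cont fi pi F S (csem fi pi F a \<psi>)"
| "cval fi pi F (CExF F' a P \<psi> # S) = cont fi pi F S (exsem fi pi F F' a P \<psi>)"
| "cval fi pi F _ = False"

fun wff :: "('g \<Rightarrow> 'v list \<Rightarrow> 'v) \<Rightarrow> ('r,'g,'p,'v) cframe \<Rightarrow> bool" where
  "wff fi (CEv a \<psi>) = det_c fi \<psi>"
| "wff fi (CDown a \<psi>) = det_c fi \<psi>"
| "wff fi (CExF F' a P \<psi>) = (det_pat fi P \<and> det_c fi \<psi>)"
| "wff fi _ = True"

definition wfc where "wfc fi S = (\<forall>x\<in>set S. wff fi x)"

lemma cstep_inv:
  assumes "cstep fi pi F S1 S2" "wfc fi S1"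
  shows "cval fi pi F S2 = cval fi pi F S1 \<and> wfc fi S2"
  using assms
proof (induction rule: cstep.induct)
  case c_or
  then show ?case by (simp add: wfc_def disj_commute)
next
  case c_ex
  then show ?case by (auto simp: wfc_def exsem_def)
next
  case (c_ex_match a P F' H e' F0 \<psi> S)
  then have d: "det_pat fi P" by (auto simp: wfc_def)
  then obtain f where P: "P = ({#}, {#f#})" by (rule det_patE)
  show ?case using c_ex_match exsem_split[OF d c_ex_match(1), of pi F0 \<psi>] P
    by (auto simp: wfc_def)
next
  case c_ex_none
  then show ?case by (auto simp: wfc_def exsem_def)
qed (auto simp: wfc_def)

lemma csteps_inv:
  assumes "(cstep fi pi F)\<^sup>*\<^sup>* S1 S2" "wfc fi S1"
  shows "cval fi pi F S2 = cval fi pi F S1 \<and> wfc fi S2"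
  using assms
  by (induction rule: rtranclp_induct) (auto dest: cstep_inv)

lemma cex_complete:
  assumes d: "det_pat fi P"
    and IH: "\<And>e' S. (cstep fi pi F)\<^sup>*\<^sup>* (CEv e' \<psi> # S) (Res (csem fi pi F e' \<psi>) # S)"
  shows "(cstep fi pi F)\<^sup>*\<^sup>* (CExF F' a P \<psi> # S) (Res (exsem fi pi F F' a P \<psi>) # S)"
proof (induction "size F'" arbitrary: F' rule: less_induct)
  case less
  obtain f where P: "P = ({#}, {#f#})" using d by (rule det_patE)
  show ?case
  proof (cases "\<exists>H e'. match fi a P F' H e'")
    case False
    then have "cstep fi pi F (CExF F' a P \<psi> # S) (Res False # S)" by (rule c_ex_none)
    moreover have "\<not> exsem fi pi F F' a P \<psi>" using False by (auto simp: exsem_def)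
    ultimately show ?thesis by auto
  next
    case True
    then obtain H e' where m: "match fi a P F' H e'" by blast
    have F': "F' = H + {#inst fi e' f#}" using m P by (simp add: match_def)
    have s1: "cstep fi pi F (CExF F' a P \<psi> # S) (CEv e' \<psi> # CExF H a P \<psi> # S)"
      using c_ex_match[OF m, of pi F \<psi> S] P by simp
    have s2: "(cstep fi pi F)\<^sup>*\<^sup>* (CEv e' \<psi> # CExF H a P \<psi> # S)
        (Res (csem fi pi F e' \<psi>) # CExF H a P \<psi> # S)" by (rule IH)
    have es: "exsem fi pi F F' a P \<psi> = (csem fi pi F e' \<psi> \<or> exsem fi pi F H a P \<psi>)"
      by (rule exsem_split[OF d m])
    show ?thesis
    proof (cases "csem fi pi F e' \<psi>")
      case True
      then have s3: "cstep fi pi F (Res (csem fi pi F e' \<psi>) # CExF H a P \<psi> # S) (Res True # S)"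
        using c_ex_true by simp
      have "(cstep fi pi F)\<^sup>*\<^sup>* (CExF F' a P \<psi> # S) (Res True # S)"
        using converse_rtranclp_into_rtranclp[OF s1 rtranclp.rtrancl_into_rtrancl[OF s2 s3]] .
      then show ?thesis using es True by simp
    next
      case False
      then have s3: "cstep fi pi F (Res (csem fi pi F e' \<psi>) # CExF H a P \<psi> # S) (CExF H a P \<psi> # S)"
        using c_ex_false by simp
      have "size H < size F'" using F' by simp
      then have s4: "(cstep fi pi F)\<^sup>*\<^sup>* (CExF H a P \<psi> # S) (Res (exsem fi pi F H a P \<psi>) # S)"
        by (rule less)
      have "(cstep fi pi F)\<^sup>*\<^sup>* (CExF F' a P \<psi> # S) (Res (exsem fi pi F H a P \<psi>) # S)"
        using converse_rtranclp_into_rtranclp[OF s1 rtranclp_trans[OF rtranclp.rtrancl_into_rtrancl[OF s2 s3] s4]] .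
      then show ?thesis using es False by simp
    qed
  qed
qed

lemma cond_complete:
  "det_c fi \<psi> \<Longrightarrow> (cstep fi pi F)\<^sup>*\<^sup>* (CEv a \<psi> # S) (Res (csem fi pi F a \<psi>) # S)"
proof (induction \<psi> arbitrary: a S)
  case CFalse
  show ?case using c_false[of fi pi F a S] by simp
next
  case (CB b)
  show ?case using c_bool[of fi pi F a b S] by simp
next
  case (CNot \<psi>)
  have s1: "(cstep fi pi F)\<^sup>*\<^sup>* (CEv a \<psi> # NotF # S) (Res (csem fi pi F a \<psi>) # NotF # S)"
    using CNot by simp
  have s2: "cstep fi pi F (Res (csem fi pi F a \<psi>) # NotF # S) (Res (csem fi pi F a (CNot \<psi>)) # S)"
    using c_notres[of fi pi F "csem fi pi F a \<psi>" S] by simp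
  show ?case
    using converse_rtranclp_into_rtranclp[OF c_not rtranclp.rtrancl_into_rtrancl[OF s1 s2]] .
next
  case (COr \<psi>1 \<psi>2)
  have s1: "(cstep fi pi F)\<^sup>*\<^sup>* (CEv a \<psi>2 # CDown a \<psi>1 # S) (Res (csem fi pi F a \<psi>2) # CDown a \<psi>1 # S)"
    using COr by simp
  have s2: "(cstep fi pi F)\<^sup>*\<^sup>* (Res (csem fi pi F a \<psi>2) # CDown a \<psi>1 # S) (Res (csem fi pi F a (COr \<psi>1 \<psi>2)) # S)"
  proof (cases "csem fi pi F a \<psi>2")
    case True
    then show ?thesis using c_down_true[of fi pi F a \<psi>1 S] by simp
  next
    case False
    have h: "(cstep fi pi F)\<^sup>*\<^sup>* (CEv a \<psi>1 # S) (Res (csem fi pi F a \<psi>1) # S)" using COr by simp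
    show ?thesis using converse_rtranclp_into_rtranclp[OF c_down_false[of fi pi F a \<psi>1 S] h] False
      by simp
  qed
  show ?case using converse_rtranclp_into_rtranclp[OF c_or rtranclp_trans[OF s1 s2]] .
next
  case (CEx P \<psi>)
  then have d: "det_pat fi P" "det_c fi \<psi>" by auto
  have h: "(cstep fi pi F)\<^sup>*\<^sup>* (CExF F a P \<psi> # S) (Res (exsem fi pi F F a P \<psi>) # S)"
    by (rule cex_complete[OF d(1)]) (use CEx d in auto)
  have "(cstep fi pi F)\<^sup>*\<^sup>* (CEv a (CEx P \<psi>) # S) (Res (exsem fi pi F F a P \<psi>) # S)"
    using converse_rtranclp_into_rtranclp[OF c_ex h] .
  then show ?case by (simp add: exsem_def)
qed

section \<open>Query semantics\<close>

definition matches where "matches fi a P F = {e'. \<exists>H. match fi a P F H e'}"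

fun qsem :: "('g \<Rightarrow> 'v list \<Rightarrow> 'v) \<Rightarrow> ('p \<Rightarrow> 'v list \<Rightarrow> bool) \<Rightarrow> ('r,'g,'p,'v) gfact multiset
   \<Rightarrow> 'v env \<Rightarrow> ('r,'g,'p,'v) query \<Rightarrow> ('r,'g,'p,'v) gfact set" where
  "qsem fi pi F a QEmpty = {}"
| "qsem fi pi F a (QFact f) = {inst fi a f}"
| "qsem fi pi F a (QPlus q1 q2) = qsem fi pi F a q1 \<union> qsem fi pi F a q2"
| "qsem fi pi F a (QImp \<phi> q) = (if csem fi pi F a \<phi> then qsem fi pi F a q else {})"
| "qsem fi pi F a (QFrom P q) = (\<Union>e'\<in>matches fi a P F. qsem fi pi F e' q)"

fun frsem where
  "frsem fi pi F (QEv a q) = qsem fi pi F a q"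
| "frsem fi pi F (QCondF a S' q) = (if cval fi pi F S' then qsem fi pi F a q else {})"
| "frsem fi pi F (QFromF F'' a P q) = (\<Union>e'\<in>matches fi a P F''. qsem fi pi F e' q)"

fun stsem where
  "stsem fi pi (QS F F' S) = set_mset F' \<union> (\<Union>x\<in>set S. frsem fi pi F x)"
| "stsem fi pi (Ans F') = set_mset F'"

fun wfqf where
  "wfqf fi (QEv a q) = det_q fi q"
| "wfqf fi (QCondF a S' q) = (wfc fi S' \<and> det_q fi q)"
| "wfqf fi (QFromF F'' a P q) = det_q fi q"

fun wfq where
  "wfq fi (QS F F' S) = (\<forall>x\<in>set S. wfqf fi x)"
| "wfq fi (Ans F') = True"

lemma matches_sub:
  assumes "F'' = H + image_mset (inst fi e') (fst P + snd P)"
  shows "matches fi a P (H + image_mset (inst fi e') (fst P)) \<subseteq> matches fi a P F''"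
proof
  fix e2 assume "e2 \<in> matches fi a P (H + image_mset (inst fi e') (fst P))"
  then obtain H2 where "match fi a P (H + image_mset (inst fi e') (fst P)) H2 e2"
    by (auto simp: matches_def)
  then have "match fi a P (H + image_mset (inst fi e') (fst P) + image_mset (inst fi e') (snd P)) (H2 + image_mset (inst fi e') (snd P)) e2"
    by (rule match_sub)
  then show "e2 \<in> matches fi a P F''" using assms by (auto simp: matches_def ac_simps)
qed

lemma qstep_inv:
  assumes "qstep fi pi s1 s2" "wfq fi s1"
  shows "stsem fi pi s2 \<subseteq> stsem fi pi s1 \<and> wfq fi s2"
  using assms
proof (induction rule: qstep.induct)
  case (q_imp F F' a \<phi> R S)
  then show ?case by (auto simp: wfc_def)
next
  case (q_cond_step F S1 S2 F' a R S)
  have w: "wfc fi S1" using q_cond_step(2) by simp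
  have "cval fi pi F S2 = cval fi pi F S1 \<and> wfc fi S2" using cstep_inv[OF q_cond_step(1) w] .
  then show ?case using q_cond_step by auto
next
  case (q_from F F' a P R S)
  then show ?case by auto
next
  case (q_from_match a P F'' H e' F F' R S)
  have "e' \<in> matches fi a P F''" using q_from_match(1) by (auto simp: matches_def)
  moreover have "matches fi a P (H + image_mset (inst fi e') (fst P)) \<subseteq> matches fi a P F''"
    by (rule matches_sub) (use q_from_match(1) in \<open>simp add: match_def\<close>)
  ultimately show ?case using q_from_match by fastforce
next
  case (q_from_none a P F'' F F' R S)
  then show ?case by (auto simp: matches_def)
qed auto

lemma qsteps_inv:
  assumes "(qstep fi pi)\<^sup>*\<^sup>* s1 s2" "wfq fi s1"
  shows "stsem fi pi s2 \<subseteq> stsem fi pi s1 \<and> wfq fi s2"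
  using assms
  by (induction rule: rtranclp_induct) (auto dest: qstep_inv)

lemma csteps_lift:
  "(cstep fi pi F)\<^sup>*\<^sup>* S1 S2 \<Longrightarrow>
   (qstep fi pi)\<^sup>*\<^sup>* (QS F F' (QCondF a S1 R # S)) (QS F F' (QCondF a S2 R # S))"
proof (induction rule: rtranclp_induct)
  case (step y z)
  then show ?case using q_cond_step[OF step(2)] by (meson rtranclp.rtrancl_into_rtrancl)
qed auto

lemma from_complete:
  assumes d: "det_pat fi P"
    and IH: "\<And>e' F' S. \<exists>M. (qstep fi pi)\<^sup>*\<^sup>* (QS F F' (QEv e' R # S)) (QS F (F' + M) S)
              \<and> qsem fi pi F e' R \<subseteq> set_mset M"
  shows "\<exists>M. (qstep fi pi)\<^sup>*\<^sup>* (QS F F' (QFromF F'' a P R # S)) (QS F (F' + M) S)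
              \<and> (\<Union>e'\<in>matches fi a P F''. qsem fi pi F e' R) \<subseteq> set_mset M"
proof (induction "size F''" arbitrary: F'' F' rule: less_induct)
  case less
  obtain f where P: "P = ({#}, {#f#})" and u: "unique_matching fi f" using d by (rule det_patE)
  show ?case
  proof (cases "\<exists>H e'. match fi a P F'' H e'")
    case False
    then have "qstep fi pi (QS F F' (QFromF F'' a P R # S)) (QS F F' S)" by (rule q_from_none)
    moreover have "matches fi a P F'' = {}" using False by (auto simp: matches_def)
    ultimately show ?thesis by (intro exI[of _ "{#}"]) auto
  next
    case True
    then obtain H e' where m: "match fi a P F'' H e'" by blast
    have F'': "F'' = H + {#inst fi e' f#}" using m P by (simp add: match_def)
    have s1: "qstep fi pi (QS F F' (QFromF F'' a P R # S)) (QS F F' (QEv e' R # QFromF H a P R # S))"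
      using q_from_match[OF m, of pi F F' R S] P by simp
    obtain M1 where s2: "(qstep fi pi)\<^sup>*\<^sup>* (QS F F' (QEv e' R # QFromF H a P R # S)) (QS F (F' + M1) (QFromF H a P R # S))"
      and M1: "qsem fi pi F e' R \<subseteq> set_mset M1" using IH by blast
    have "size H < size F''" using F'' by simp
    then obtain M2 where s3: "(qstep fi pi)\<^sup>*\<^sup>* (QS F (F' + M1) (QFromF H a P R # S)) (QS F (F' + M1 + M2) S)"
      and M2: "(\<Union>e'\<in>matches fi a P H. qsem fi pi F e' R) \<subseteq> set_mset M2"
      using less by blast
    have ms: "matches fi a P F'' \<subseteq> insert e' (matches fi a P H)"
      using match_split[OF P u m] by (auto simp: matches_def)
    have "(qstep fi pi)\<^sup>*\<^sup>* (QS F F' (QFromF F'' a P R # S)) (QS F (F' + (M1 + M2)) S)"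
      using converse_rtranclp_into_rtranclp[OF s1 rtranclp_trans[OF s2 s3]] by (simp add: ac_simps)
    moreover have "(\<Union>e'\<in>matches fi a P F''. qsem fi pi F e' R) \<subseteq> set_mset (M1 + M2)"
      using ms M1 M2 by fastforce
    ultimately show ?thesis by blast
  qed
qed

lemma query_complete:
  "det_q fi q \<Longrightarrow> \<exists>M. (qstep fi pi)\<^sup>*\<^sup>* (QS F F' (QEv a q # S)) (QS F (F' + M) S)
              \<and> qsem fi pi F a q \<subseteq> set_mset M"
proof (induction q arbitrary: a F' S)
  case QEmpty
  show ?case using q_empty[of fi pi F F' a S] by (intro exI[of _ "{#}"]) auto
next
  case (QFact f)
  show ?case using q_fact[of fi pi F F' a f S] by (intro exI[of _ "{#inst fi a f#}"]) auto
next
  case (QPlus q1 q2)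
  obtain M1 where s1: "(qstep fi pi)\<^sup>*\<^sup>* (QS F F' (QEv a q1 # QEv a q2 # S)) (QS F (F' + M1) (QEv a q2 # S))"
    and M1: "qsem fi pi F a q1 \<subseteq> set_mset M1" using QPlus by fastforce
  obtain M2 where s2: "(qstep fi pi)\<^sup>*\<^sup>* (QS F (F' + M1) (QEv a q2 # S)) (QS F (F' + M1 + M2) S)"
    and M2: "qsem fi pi F a q2 \<subseteq> set_mset M2" using QPlus by fastforce
  have "(qstep fi pi)\<^sup>*\<^sup>* (QS F F' (QEv a (QPlus q1 q2) # S)) (QS F (F' + (M1 + M2)) S)"
    using converse_rtranclp_into_rtranclp[OF q_plus rtranclp_trans[OF s1 s2]] by (simp add: ac_simps)
  then show ?case using M1 M2 by (intro exI[of _ "M1 + M2"]) auto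
next
  case (QImp \<phi> q)
  then have d: "det_c fi \<phi>" "det_q fi q" by auto
  have c: "(cstep fi pi F)\<^sup>*\<^sup>* [CEv a \<phi>] [Res (csem fi pi F a \<phi>)]"
    using cond_complete[OF d(1), of pi F a "[]"] by simp
  have s1: "(qstep fi pi)\<^sup>*\<^sup>* (QS F F' (QEv a (QImp \<phi> q) # S)) (QS F F' (QCondF a [Res (csem fi pi F a \<phi>)] q # S))"
    using converse_rtranclp_into_rtranclp[OF q_imp csteps_lift[OF c]] .
  show ?case
  proof (cases "csem fi pi F a \<phi>")
    case True
    obtain M where s2: "(qstep fi pi)\<^sup>*\<^sup>* (QS F F' (QEv a q # S)) (QS F (F' + M) S)"
      and M: "qsem fi pi F a q \<subseteq> set_mset M" using QImp d by blast
    have s1': "(qstep fi pi)\<^sup>*\<^sup>* (QS F F' (QEv a (QImp \<phi> q) # S)) (QS F F' (QCondF a [Res True] q # S))"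
      using s1 True by simp
    have "(qstep fi pi)\<^sup>*\<^sup>* (QS F F' (QEv a (QImp \<phi> q) # S)) (QS F (F' + M) S)"
      using rtranclp_trans[OF s1' converse_rtranclp_into_rtranclp[OF q_cond_true s2]] .
    then show ?thesis using M True by auto
  next
    case False
    have "(qstep fi pi)\<^sup>*\<^sup>* (QS F F' (QEv a (QImp \<phi> q) # S)) (QS F (F' + {#}) S)"
    proof -
      have s1': "(qstep fi pi)\<^sup>*\<^sup>* (QS F F' (QEv a (QImp \<phi> q) # S)) (QS F F' (QCondF a [Res False] q # S))"
        using s1 False by simp
      show ?thesis using rtranclp.rtrancl_into_rtrancl[OF s1' q_cond_false] by simp
    qed
    then show ?thesis using False by (intro exI[of _ "{#}"]) auto
  qed
next
  case (QFrom P q)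
  then have d: "det_pat fi P" "det_q fi q" by auto
  obtain M where s: "(qstep fi pi)\<^sup>*\<^sup>* (QS F F' (QFromF F a P q # S)) (QS F (F' + M) S)"
    and M: "(\<Union>e'\<in>matches fi a P F. qsem fi pi F e' q) \<subseteq> set_mset M"
    using from_complete[OF d(1), of pi F q F' F a S] QFrom d by blast
  show ?case using converse_rtranclp_into_rtranclp[OF q_from s] M by auto
qed

section \<open>Translation\<close>

fun substv :: "(nat \<Rightarrow> nat) \<Rightarrow> ('g,'v) vt \<Rightarrow> ('g,'v) vt" where
  "substv g (Var x) = Var (g x)"
| "substv g (Const c) = Const c"
| "substv g (Fn h ts) = Fn h (map (substv g) ts)"

fun substb :: "(nat \<Rightarrow> nat) \<Rightarrow> ('g,'p,'v) bexp \<Rightarrow> ('g,'p,'v) bexp" where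
  "substb g BTrue = BTrue"
| "substb g BFalse = BFalse"
| "substb g (BNot b) = BNot (substb g b)"
| "substb g (BAnd b c) = BAnd (substb g b) (substb g c)"
| "substb g (BOr b c) = BOr (substb g b) (substb g c)"
| "substb g (BEq s t) = BEq (substv g s) (substv g t)"
| "substb g (BPred p ts) = BPred p (map (substv g) ts)"

lemma evalv_subst: "evalv fi e (substv g s) = evalv fi (e \<circ> g) s"
  by (induction g s rule: substv.induct) (auto simp: comp_def cong: map_cong)

lemma fvv_subst: "fvv (substv g s) = g ` fvv s"
  by (induction g s rule: substv.induct) auto

lemma evalb_subst: "evalb fi pi e (substb g b) = evalb fi pi (e \<circ> g) b"
  by (induction b) (auto simp: evalv_subst comp_def)

lemma fvb_subst: "fvb (substb g b) = g ` fvb b"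
  by (induction b) (auto simp: fvv_subst)

fun eqs :: "nat list \<Rightarrow> nat list \<Rightarrow> ('g,'p,'v) bexp" where
  "eqs (x # xs) (y # ys) = BAnd (BEq (Var x) (Var y)) (eqs xs ys)"
| "eqs _ _ = BTrue"

lemma evalb_eqs: "length xs = length ys \<Longrightarrow>
  evalb fi pi e (eqs xs ys) = (map (\<lambda>x. evalv fi e (Var x)) xs = map (\<lambda>x. evalv fi e (Var x)) ys)"
proof (induction xs arbitrary: ys)
  case Nil then show ?case by simp
next
  case (Cons x xs) then show ?case by (cases ys) auto
qed

lemma fvb_eqs: "fvb (eqs xs ys) \<subseteq> set xs \<union> set ys"
  by (induction xs ys rule: eqs.induct) auto

definition cand where "cand x y = CNot (COr (CNot x) (CNot y))"

lemma csem_cand[simp]: "csem fi pi F a (cand x y) = (csem fi pi F a x \<and> csem fi pi F a y)"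
  by (simp add: cand_def)

lemma closed_cand[simp]: "closed_c B (cand x y) = (closed_c B x \<and> closed_c B y)"
  by (simp add: cand_def)

lemma det_cand[simp]: "det_c fi (cand x y) = (det_c fi x \<and> det_c fi y)"
  by (simp add: cand_def)

definition relpat :: "'r \<Rightarrow> nat list \<Rightarrow> ('r,'g,'p,'v) pat" where
  "relpat r ws = ({#}, {#FT (Rel r) (map Var ws)#})"

fun cgen :: "('r \<Rightarrow> nat) \<Rightarrow> ('r,'g,'p,'v) ra \<Rightarrow> nat \<Rightarrow> (nat list \<Rightarrow> nat \<Rightarrow> ('r,'g,'p,'v) cond)
    \<Rightarrow> ('r,'g,'p,'v) cond" where
  "cgen ar (Rel r) n c = CEx (relpat r [n..<n + ar r]) (c [n..<n + ar r] (n + ar r))"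
| "cgen ar (Proj is R) n c = cgen ar R n (\<lambda>ws m. c (map (\<lambda>i. ws ! (i - 1)) is) m)"
| "cgen ar (Sel \<phi> R) n c = cgen ar R n (\<lambda>ws m. cand (CB (substb (\<lambda>i. ws ! (i - 1)) \<phi>)) (c ws m))"
| "cgen ar (Union R1 R2) n c = COr (cgen ar R1 n c) (cgen ar R2 n c)"
| "cgen ar (Prod R1 R2) n c = cgen ar R1 n (\<lambda>ws1 m. cgen ar R2 m (\<lambda>ws2 m'. c (ws1 @ ws2) m'))"
| "cgen ar (Diff R1 R2) n c = cgen ar R1 n (\<lambda>ws m. cand (CNot (cgen ar R2 m (\<lambda>ws2 m'. CB (eqs ws ws2)))) (c ws m))"

fun qgen :: "('r \<Rightarrow> nat) \<Rightarrow> ('r,'g,'p,'v) ra \<Rightarrow> nat \<Rightarrow> (nat list \<Rightarrow> nat \<Rightarrow> ('r,'g,'p,'v) query)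
    \<Rightarrow> ('r,'g,'p,'v) query" where
  "qgen ar (Rel r) n c = QFrom (relpat r [n..<n + ar r]) (c [n..<n + ar r] (n + ar r))"
| "qgen ar (Proj is R) n c = qgen ar R n (\<lambda>ws m. c (map (\<lambda>i. ws ! (i - 1)) is) m)"
| "qgen ar (Sel \<phi> R) n c = qgen ar R n (\<lambda>ws m. QImp (CB (substb (\<lambda>i. ws ! (i - 1)) \<phi>)) (c ws m))"
| "qgen ar (Union R1 R2) n c = QPlus (qgen ar R1 n c) (qgen ar R2 n c)"
| "qgen ar (Prod R1 R2) n c = qgen ar R1 n (\<lambda>ws1 m. qgen ar R2 m (\<lambda>ws2 m'. c (ws1 @ ws2) m'))"
| "qgen ar (Diff R1 R2) n c = qgen ar R1 n (\<lambda>ws m. QImp (CNot (cgen ar R2 m (\<lambda>ws2 m'. CB (eqs ws ws2)))) (c ws m))"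

section \<open>Determinism and closedness of the translation\<close>

lemma um_vars: "unique_matching fi (FT R (map Var ws))"
  unfolding unique_matching_def
proof (intro allI impI)
  fix t' s1 s2
  assume d1: "dom s1 = fvf (FT R (map Var ws))" and d2: "dom s2 = fvf (FT R (map Var ws))"
    and i1: "inst fi s1 (FT R (map Var ws)) = t'" and i2: "inst fi s2 (FT R (map Var ws)) = t'"
  have d1': "dom s1 = set ws" and d2': "dom s2 = set ws" using d1 d2 by auto
  have eq: "map (\<lambda>x. evalv fi s1 (Var x)) ws = map (\<lambda>x. evalv fi s2 (Var x)) ws"
  proof -
    have "inst fi s1 (FT R (map Var ws)) = inst fi s2 (FT R (map Var ws))" using i1 i2 by simp
    then show ?thesis by (simp add: comp_def)
  qed
  show "s1 = s2"
  proof
    fix x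
    show "s1 x = s2 x"
    proof (cases "x \<in> set ws")
      case True
      then obtain v1 v2 where "s1 x = Some v1" "s2 x = Some v2" using d1' d2' by blast
      moreover have "evalv fi s1 (Var x) = evalv fi s2 (Var x)" using eq True by (simp add: map_eq_conv)
      ultimately show ?thesis by simp
    next
      case False
      then show ?thesis using d1' d2' by (metis domIff)
    qed
  qed
qed

lemma det_relpat: "det_pat fi (relpat r ws)"
  unfolding det_pat_def relpat_def using um_vars by blast

lemma pvars_relpat[simp]: "pvars (relpat r ws) = set ws"
  by (auto simp: pvars_def relpat_def)

lemma cgen_det: "(\<And>ws m. det_c fi (c ws m)) \<Longrightarrow> det_c fi (cgen ar R n c)"
  by (induction ar R n c rule: cgen.induct) (auto simp: det_relpat)

lemma qgen_det: "(\<And>ws m. det_q fi (c ws m)) \<Longrightarrow> det_q fi (qgen ar R n c)"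
  by (induction ar R n c rule: qgen.induct) (auto simp: det_relpat cgen_det)

lemma proj_sub:
  assumes "\<forall>i\<in>set is. 1 \<le> i \<and> i \<le> k" "length ws = k"
  shows "set (map (\<lambda>i. ws ! (i - 1)) is) \<subseteq> set ws"
  using assms by auto

lemma subst_sub:
  assumes "fvb \<phi> \<subseteq> {1..k}" "length ws = k"
  shows "fvb (substb (\<lambda>i. ws ! (i - 1)) \<phi>) \<subseteq> set ws"
proof
  fix x assume "x \<in> fvb (substb (\<lambda>i. ws ! (i - 1)) \<phi>)"
  then obtain i where i: "i \<in> fvb \<phi>" and x: "x = ws ! (i - 1)" by (auto simp: fvb_subst)
  then have "i - 1 < length ws" using assms by force
  then show "x \<in> set ws" using x by simp
qed

lemma cgen_closed:
  "wf_ra S ar R \<Longrightarrow>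
   (\<And>ws m B'. B \<subseteq> B' \<Longrightarrow> set ws \<subseteq> B' \<Longrightarrow> length ws = arity ar R \<Longrightarrow> closed_c B' (c ws m)) \<Longrightarrow>
   closed_c B (cgen ar R n c)"
proof (induction R arbitrary: B n c)
  case (Rel r)
  then show ?case by simp
next
  case (Proj ixs R)
  show ?case
  unfolding cgen.simps proof (rule Proj.IH)
    show "wf_ra S ar R" using Proj.prems by simp
    fix ws m B'
    assume a: "B \<subseteq> B'" "set ws \<subseteq> B'" "length ws = arity ar R"
    have "set (map (\<lambda>i. ws ! (i - 1)) ixs) \<subseteq> set ws"
      by (rule proj_sub) (use Proj.prems a in auto)
    then show "closed_c B' (c (map (\<lambda>i. ws ! (i - 1)) ixs) m)"
      using a by (intro Proj.prems(2)) auto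
  qed
next
  case (Sel \<phi> R)
  show ?case
  unfolding cgen.simps proof (rule Sel.IH)
    show "wf_ra S ar R" using Sel.prems by simp
    fix ws m B'
    assume a: "B \<subseteq> B'" "set ws \<subseteq> B'" "length ws = arity ar R"
    have "fvb (substb (\<lambda>i. ws ! (i - 1)) \<phi>) \<subseteq> set ws"
      by (rule subst_sub) (use Sel.prems a in auto)
    then show "closed_c B' (cand (CB (substb (\<lambda>i. ws ! (i - 1)) \<phi>)) (c ws m))"
      using a Sel.prems(2)[of B' ws m] by auto
  qed
next
  case (Union R1 R2)
  then show ?case by simp
next
  case (Prod R1 R2)
  show ?case
  unfolding cgen.simps proof (rule Prod.IH(1))
    show "wf_ra S ar R1" using Prod.prems by simp
    fix ws m B'
    assume a: "B \<subseteq> B'" "set ws \<subseteq> B'" "length ws = arity ar R1"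
    show "closed_c B' (cgen ar R2 m (\<lambda>ws2. c (ws @ ws2)))"
      by (rule Prod.IH(2)) (use Prod.prems a in \<open>auto intro!: Prod.prems(2)\<close>)
  qed
next
  case (Diff R1 R2)
  show ?case
  unfolding cgen.simps proof (rule Diff.IH(1))
    show "wf_ra S ar R1" using Diff.prems by simp
    fix ws m B'
    assume a: "B \<subseteq> B'" "set ws \<subseteq> B'" "length ws = arity ar R1"
    have "closed_c B' (cgen ar R2 m (\<lambda>ws2 m'. CB (eqs ws ws2)))"
    proof (rule Diff.IH(2))
      show "wf_ra S ar R2" using Diff.prems by simp
      fix ws2 m' B''
      assume b: "B' \<subseteq> B''" "set ws2 \<subseteq> B''" "length ws2 = arity ar R2"
      have "set ws \<union> set ws2 \<subseteq> B''" using a b by auto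
      then show "closed_c B'' (CB (eqs ws ws2))" by (metis closed_c.simps(2) fvb_eqs subset_trans)
    qed
    then show "closed_c B' (cand (CNot (cgen ar R2 m (\<lambda>ws2 m'. CB (eqs ws ws2)))) (c ws m))"
      using Diff.prems a by simp
  qed
qed

lemma qgen_closed:
  "wf_ra S ar R \<Longrightarrow>
   (\<And>ws m B'. B \<subseteq> B' \<Longrightarrow> set ws \<subseteq> B' \<Longrightarrow> length ws = arity ar R \<Longrightarrow> closed_q B' (c ws m)) \<Longrightarrow>
   closed_q B (qgen ar R n c)"
proof (induction R arbitrary: B n c)
  case (Rel r)
  then show ?case by simp
next
  case (Proj ixs R)
  show ?case
  unfolding qgen.simps proof (rule Proj.IH)
    show "wf_ra S ar R" using Proj.prems by simp
    fix ws m B'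
    assume a: "B \<subseteq> B'" "set ws \<subseteq> B'" "length ws = arity ar R"
    have "set (map (\<lambda>i. ws ! (i - 1)) ixs) \<subseteq> set ws"
      by (rule proj_sub) (use Proj.prems a in auto)
    then show "closed_q B' (c (map (\<lambda>i. ws ! (i - 1)) ixs) m)"
      using a by (intro Proj.prems(2)) auto
  qed
next
  case (Sel \<phi> R)
  show ?case
  unfolding qgen.simps proof (rule Sel.IH)
    show "wf_ra S ar R" using Sel.prems by simp
    fix ws m B'
    assume a: "B \<subseteq> B'" "set ws \<subseteq> B'" "length ws = arity ar R"
    have "fvb (substb (\<lambda>i. ws ! (i - 1)) \<phi>) \<subseteq> set ws"
      by (rule subst_sub) (use Sel.prems a in auto)
    then show "closed_q B' (QImp (CB (substb (\<lambda>i. ws ! (i - 1)) \<phi>)) (c ws m))"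
      using a Sel.prems(2)[of B' ws m] by auto
  qed
next
  case (Union R1 R2)
  then show ?case by simp
next
  case (Prod R1 R2)
  show ?case
  unfolding qgen.simps proof (rule Prod.IH(1))
    show "wf_ra S ar R1" using Prod.prems by simp
    fix ws m B'
    assume a: "B \<subseteq> B'" "set ws \<subseteq> B'" "length ws = arity ar R1"
    show "closed_q B' (qgen ar R2 m (\<lambda>ws2. c (ws @ ws2)))"
      by (rule Prod.IH(2)) (use Prod.prems a in \<open>auto intro!: Prod.prems(2)\<close>)
  qed
next
  case (Diff R1 R2)
  show ?case
  unfolding qgen.simps proof (rule Diff.IH(1))
    show "wf_ra S ar R1" using Diff.prems by simp
    fix ws m B'
    assume a: "B \<subseteq> B'" "set ws \<subseteq> B'" "length ws = arity ar R1"
    have "closed_c B' (cgen ar R2 m (\<lambda>ws2 m'. CB (eqs ws ws2)))"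
    proof (rule cgen_closed)
      show "wf_ra S ar R2" using Diff.prems by simp
      fix ws2 m' B''
      assume b: "B' \<subseteq> B''" "set ws2 \<subseteq> B''" "length ws2 = arity ar R2"
      have "set ws \<union> set ws2 \<subseteq> B''" using a b by auto
      then show "closed_c B'' (CB (eqs ws ws2))" by (metis closed_c.simps(2) fvb_eqs subset_trans)
    qed
    then show "closed_q B' (QImp (CNot (cgen ar R2 m (\<lambda>ws2 m'. CB (eqs ws ws2)))) (c ws m))"
      using Diff.prems a by simp
  qed
qed

section \<open>Semantics of the translation\<close>

definition ext :: "'v env \<Rightarrow> nat \<Rightarrow> 'v list \<Rightarrow> 'v env" where
  "ext a n u = (\<lambda>x. if n \<le> x \<and> x < n + length u then Some (u ! (x - n)) else a x)"

lemma ext_props: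
  assumes "dom a \<subseteq> {..<n}"
  shows "a \<subseteq>\<^sub>m ext a n u" "dom (ext a n u) = dom a \<union> {n..<n + length u}"
    "map (\<lambda>x. evalv fi (ext a n u) (Var x)) [n..<n + length u] = u"
proof -
  show "a \<subseteq>\<^sub>m ext a n u" using assms by (auto simp: map_le_def ext_def)
  show "dom (ext a n u) = dom a \<union> {n..<n + length u}" by (auto simp: ext_def split: if_splits)
  show "map (\<lambda>x. evalv fi (ext a n u) (Var x)) [n..<n + length u] = u"
    by (rule nth_equalityI) (auto simp: ext_def)
qed

lemma relmatch:
  assumes "dom a \<subseteq> {..<n}"
  shows "(\<exists>H. match fi a (relpat r [n..<n + k]) F H e') \<longleftrightarrow>
         (\<exists>u. GF (Rel r) u \<in># F \<and> length u = k \<and> e' = ext a n u)"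
proof
  assume "\<exists>H. match fi a (relpat r [n..<n + k]) F H e'"
  then obtain H where m: "match fi a (relpat r [n..<n + k]) F H e'" by blast
  define u where "u = map (\<lambda>x. evalv fi e' (Var x)) [n..<n + k]"
  have le: "a \<subseteq>\<^sub>m e'" and d: "dom e' = dom a \<union> {n..<n + k}"
    using m unfolding match_def pvars_relpat set_upt by blast+
  have F: "F = H + {#GF (Rel r) u#}"
    using m by (simp add: match_def relpat_def u_def comp_def)
  have lu: "length u = k" by (simp add: u_def)
  have "e' = ext a n u"
  proof
    fix x
    show "e' x = ext a n u x"
    proof (cases "n \<le> x \<and> x < n + k")
      case True
      then have "x \<in> dom e'" using d by simp
      then obtain v where v: "e' x = Some v" by (auto dest: domD)
      have xl: "x - n < k" using True by arith
      have "u ! (x - n) = evalv fi e' (Var (n + (x - n)))" using xl by (simp add: u_def)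
      then have "u ! (x - n) = evalv fi e' (Var x)" using True by simp
      then show ?thesis using True v lu by (simp add: ext_def)
    next
      case False
      show ?thesis
      proof (cases "x \<in> dom a")
        case True
        have "ext a n u x = a x" using False lu unfolding ext_def by auto
        moreover have "a x = e' x" using le True by (simp add: map_le_def)
        ultimately show ?thesis by simp
      next
        case f2: False
        then have "x \<notin> dom e'" using d False by auto
        then have "e' x = None" by (simp add: domIff)
        moreover have "ext a n u x = a x" using False lu unfolding ext_def by auto
        moreover have "a x = None" using f2 by (simp add: domIff)
        ultimately show ?thesis by simp
      qed
    qed
  qed
  then show "\<exists>u. GF (Rel r) u \<in># F \<and> length u = k \<and> e' = ext a n u" using F lu by auto
next
  assume "\<exists>u. GF (Rel r) u \<in># F \<and> length u = k \<and> e' = ext a n u"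
  then obtain u where u: "GF (Rel r) u \<in># F" "length u = k" "e' = ext a n u" by blast
  have F: "F = (F - {#GF (Rel r) u#}) + {#GF (Rel r) u#}" using u(1) by simp
  have mp: "map (\<lambda>x. evalv fi e' (Var x)) [n..<n + k] = u" using ext_props(3)[OF assms, of fi u] u by simp
  have i: "image_mset (inst fi e') (fst (relpat r [n..<n + k]) + snd (relpat r [n..<n + k])) = {#GF (Rel r) u#}"
    using mp by (simp add: relpat_def comp_def)
  have "match fi a (relpat r [n..<n + k]) F (F - {#GF (Rel r) u#}) e'"
    unfolding match_def pvars_relpat i
    using ext_props(1,2)[OF assms, of u] u(2,3) F by simp
  then show "\<exists>H. match fi a (relpat r [n..<n + k]) F H e'" by blast
qed

lemma trb_mem:
  assumes "finite S" "db_instance S ar I" "r \<in> S"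
  shows "(GF (Rel r) u \<in># trb S I \<and> length u = ar r) \<longleftrightarrow> u \<in> I r"
proof -
  have fin: "\<forall>r\<in>S. finite (I r)" using assms(2) by (simp add: db_instance_def)
  have "set_mset (trb S I) = (\<Union>r\<in>S. GF (Rel r) ` I r)"
    unfolding trb_def using assms(1) fin by (simp add: set_mset_sum)
  then show ?thesis using assms(2,3) by (auto simp: db_instance_def)
qed

definition rep :: "('g \<Rightarrow> 'v list \<Rightarrow> 'v) \<Rightarrow> ('v env \<Rightarrow> 'x \<Rightarrow> 'y) \<Rightarrow> 'v env \<Rightarrow> nat \<Rightarrow> nat
    \<Rightarrow> (nat list \<Rightarrow> nat \<Rightarrow> 'x) \<Rightarrow> ('v list \<Rightarrow> 'y) \<Rightarrow> bool" where
  "rep fi sem a n k c \<Phi> = (\<forall>ws m b. n \<le> m \<longrightarrow> set ws \<subseteq> {..<m} \<longrightarrow> set ws \<subseteq> dom b \<longrightarrow>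
      a \<subseteq>\<^sub>m b \<longrightarrow> dom b \<subseteq> {..<m} \<longrightarrow> length ws = k \<longrightarrow>
      sem b (c ws m) = \<Phi> (map (\<lambda>x. evalv fi b (Var x)) ws))"

lemma repD:
  assumes "rep fi sem a n k c \<Phi>" "n \<le> m" "set ws \<subseteq> {..<m}" "set ws \<subseteq> dom b"
    "a \<subseteq>\<^sub>m b" "dom b \<subseteq> {..<m}" "length ws = k"
  shows "sem b (c ws m) = \<Phi> (map (\<lambda>x. evalv fi b (Var x)) ws)"
  using assms unfolding rep_def by blast

lemma rep_rel:
  assumes "rep fi sem a n k c \<Phi>" "dom a \<subseteq> {..<n}" "length u = k"
  shows "sem (ext a n u) (c [n..<n + k] (n + k)) = \<Phi> u"
proof -
  have "sem (ext a n u) (c [n..<n + k] (n + k)) = \<Phi> (map (\<lambda>x. evalv fi (ext a n u) (Var x)) [n..<n + k])"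
    by (rule repD[OF assms(1)]) (use ext_props(1,2)[OF assms(2), of u] assms(2,3) in auto)
  also have "map (\<lambda>x. evalv fi (ext a n u) (Var x)) [n..<n + k] = u"
    using ext_props(3)[OF assms(2), of fi u] assms(3) by simp
  finally show ?thesis .
qed

lemma val_mono:
  assumes "b \<subseteq>\<^sub>m b'" "set ws \<subseteq> dom b"
  shows "map (\<lambda>x. evalv fi b' (Var x)) ws = map (\<lambda>x. evalv fi b (Var x)) ws"
proof (rule map_cong[OF refl])
  fix x assume "x \<in> set ws"
  then have "x \<in> dom b" using assms(2) by blast
  then have "b' x = b x" using assms(1) by (simp add: map_le_def)
  then show "evalv fi b' (Var x) = evalv fi b (Var x)" by simp
qed

lemma dom_mono: "b \<subseteq>\<^sub>m b' \<Longrightarrow> dom b \<subseteq> dom b'"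
  by (rule map_le_implies_dom_le)

lemma proj_vals:
  assumes "\<forall>i\<in>set ixs. 1 \<le> i \<and> i \<le> length ws"
  shows "map (\<lambda>x. evalv fi b (Var x)) (map (\<lambda>i. ws ! (i - 1)) ixs) =
         map (\<lambda>i. map (\<lambda>x. evalv fi b (Var x)) ws ! (i - 1)) ixs"
proof -
  have "\<And>i. i \<in> set ixs \<Longrightarrow> i - 1 < length ws" using assms by force
  then show ?thesis by simp
qed

lemma sel_vals:
  assumes "fvb \<phi> \<subseteq> {1..length ws}" "set ws \<subseteq> dom b"
  shows "evalb fi pi b (substb (\<lambda>i. ws ! (i - 1)) \<phi>) =
         evalb fi pi (tuple_env (map (\<lambda>x. evalv fi b (Var x)) ws)) \<phi>"
  unfolding evalb_subst
proof (rule evalb_cong, rule ballI)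
  fix x assume x: "x \<in> fvb \<phi>"
  then have x1: "1 \<le> x" "x \<le> length ws" using assms(1) by auto
  then have xl: "x - 1 < length ws" by arith
  then have "ws ! (x - 1) \<in> dom b" using assms(2) nth_mem by blast
  then obtain v where v: "b (ws ! (x - 1)) = Some v" by (auto dest: domD)
  show "(b \<circ> (\<lambda>i. ws ! (i - 1))) x = tuple_env (map (\<lambda>x. evalv fi b (Var x)) ws) x"
    using v x1 xl by (simp add: tuple_env_def)
qed

lemma cgen_sem:
  fixes fi :: "'g \<Rightarrow> 'v list \<Rightarrow> 'v" and pi :: "'p \<Rightarrow> 'v list \<Rightarrow> bool" and I :: "'r \<Rightarrow> 'v list set"
    and R :: "('r,'g,'p,'v) ra"
  assumes fS: "finite S" and db: "db_instance S ar I"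
  shows "wf_ra S ar R \<Longrightarrow> dom a \<subseteq> {..<n} \<Longrightarrow>
    rep fi (csem fi pi (trb S I)) a n (arity ar R) c \<Phi> \<Longrightarrow>
    csem fi pi (trb S I) a (cgen ar R n c) = (\<exists>t\<in>eval_ra fi pi I R. \<Phi> t)"
proof (induction R arbitrary: a n c \<Phi>)
  case (Rel r)
  let ?F = "trb S I :: ('r,'g,'p,'v) gfact multiset"
  let ?ws = "[n..<n + ar r]"
  have rS: "r \<in> S" using Rel.prems by simp
  have tm: "\<And>u. (GF (Rel r) u \<in># ?F \<and> length u = ar r) \<longleftrightarrow> u \<in> I r"
    by (rule trb_mem[OF fS db rS])
  have "csem fi pi ?F a (cgen ar (Rel r) n c) =
        (\<exists>e'. (\<exists>H. match fi a (relpat r ?ws) ?F H e') \<and> csem fi pi ?F e' (c ?ws (n + ar r)))"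
    unfolding cgen.simps csem.simps by blast
  also have "\<dots> = (\<exists>u. GF (Rel r) u \<in># ?F \<and> length u = ar r \<and> csem fi pi ?F (ext a n u) (c ?ws (n + ar r)))"
    by (simp only: relmatch[OF Rel.prems(2)]) auto
  also have "\<dots> = (\<exists>u. u \<in> I r \<and> \<Phi> u)"
  proof
    assume "\<exists>u. GF (Rel r) u \<in># ?F \<and> length u = ar r \<and> csem fi pi ?F (ext a n u) (c ?ws (n + ar r))"
    then obtain u where u: "GF (Rel r) u \<in># ?F" "length u = ar r" "csem fi pi ?F (ext a n u) (c ?ws (n + ar r))"
      by blast
    have "u \<in> I r" using tm[of u] u(1,2) by simp
    moreover have "\<Phi> u" using rep_rel[OF Rel.prems(3)[simplified] Rel.prems(2) u(2)] u(3) by simp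
    ultimately show "\<exists>u. u \<in> I r \<and> \<Phi> u" by blast
  next
    assume "\<exists>u. u \<in> I r \<and> \<Phi> u"
    then obtain u where u: "u \<in> I r" "\<Phi> u" by blast
    have g: "GF (Rel r) u \<in># ?F" "length u = ar r" using tm[of u] u(1) by simp_all
    have "csem fi pi ?F (ext a n u) (c ?ws (n + ar r))"
      using rep_rel[OF Rel.prems(3)[simplified] Rel.prems(2) g(2)] u(2) by simp
    then show "\<exists>u. GF (Rel r) u \<in># ?F \<and> length u = ar r \<and> csem fi pi ?F (ext a n u) (c ?ws (n + ar r))"
      using g by blast
  qed
  finally show ?case by (simp add: Bex_def)
next
  case (Proj ixs R)
  have wf: "wf_ra S ar R" and ix: "\<forall>i\<in>set ixs. 1 \<le> i \<and> i \<le> arity ar R" using Proj.prems by auto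
  have "csem fi pi (trb S I) a (cgen ar R n (\<lambda>ws m. c (map (\<lambda>i. ws ! (i - 1)) ixs) m)) =
        (\<exists>t\<in>eval_ra fi pi I R. \<Phi> (map (\<lambda>i. t ! (i - 1)) ixs))"
  proof (rule Proj.IH[OF wf Proj.prems(2)], unfold rep_def, intro allI impI)
    fix ws m b
    assume a: "n \<le> m" "set ws \<subseteq> {..<m}" "set ws \<subseteq> dom b" "a \<subseteq>\<^sub>m b" "dom b \<subseteq> {..<m}"
      "length ws = arity ar R"
    have sub: "set (map (\<lambda>i. ws ! (i - 1)) ixs) \<subseteq> set ws" by (rule proj_sub[OF ix a(6)])
    have "csem fi pi (trb S I) b (c (map (\<lambda>i. ws ! (i - 1)) ixs) m) =
          \<Phi> (map (\<lambda>x. evalv fi b (Var x)) (map (\<lambda>i. ws ! (i - 1)) ixs))"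
      by (rule repD[OF Proj.prems(3)]) (use a sub in auto)
    also have "\<dots> = \<Phi> (map (\<lambda>i. map (\<lambda>x. evalv fi b (Var x)) ws ! (i - 1)) ixs)"
    proof -
      have pv: "map (\<lambda>x. evalv fi b (Var x)) (map (\<lambda>i. ws ! (i - 1)) ixs) =
         map (\<lambda>i. map (\<lambda>x. evalv fi b (Var x)) ws ! (i - 1)) ixs"
        by (rule proj_vals) (use ix a(6) in simp)
      show ?thesis by (simp only: pv)
    qed
    finally show "csem fi pi (trb S I) b (c (map (\<lambda>i. ws ! (i - 1)) ixs) m) =
          \<Phi> (map (\<lambda>i. map (\<lambda>x. evalv fi b (Var x)) ws ! (i - 1)) ixs)" .
  qed
  then show ?case by auto
next
  case (Sel \<phi> R)
  have wf: "wf_ra S ar R" and fv: "fvb \<phi> \<subseteq> {1..arity ar R}" using Sel.prems by auto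
  have "csem fi pi (trb S I) a (cgen ar R n (\<lambda>ws m. cand (CB (substb (\<lambda>i. ws ! (i - 1)) \<phi>)) (c ws m))) =
        (\<exists>t\<in>eval_ra fi pi I R. evalb fi pi (tuple_env t) \<phi> \<and> \<Phi> t)"
  proof (rule Sel.IH[OF wf Sel.prems(2)], unfold rep_def, intro allI impI)
    fix ws m b
    assume a: "n \<le> m" "set ws \<subseteq> {..<m}" "set ws \<subseteq> dom b" "a \<subseteq>\<^sub>m b" "dom b \<subseteq> {..<m}"
      "length ws = arity ar R"
    have "csem fi pi (trb S I) b (c ws m) = \<Phi> (map (\<lambda>x. evalv fi b (Var x)) ws)"
      by (rule repD[OF Sel.prems(3)]) (use a in auto)
    moreover have "evalb fi pi b (substb (\<lambda>i. ws ! (i - 1)) \<phi>) =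
         evalb fi pi (tuple_env (map (\<lambda>x. evalv fi b (Var x)) ws)) \<phi>"
      by (rule sel_vals) (use a fv in auto)
    ultimately show "csem fi pi (trb S I) b (cand (CB (substb (\<lambda>i. ws ! (i - 1)) \<phi>)) (c ws m)) =
       (evalb fi pi (tuple_env (map (\<lambda>x. evalv fi b (Var x)) ws)) \<phi> \<and> \<Phi> (map (\<lambda>x. evalv fi b (Var x)) ws))"
      by simp
  qed
  then show ?case by auto
next
  case (Union R1 R2)
  have "csem fi pi (trb S I) a (cgen ar R1 n c) = (\<exists>t\<in>eval_ra fi pi I R1. \<Phi> t)"
    by (rule Union.IH(1)) (use Union.prems in auto)
  moreover have "csem fi pi (trb S I) a (cgen ar R2 n c) = (\<exists>t\<in>eval_ra fi pi I R2. \<Phi> t)"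
    by (rule Union.IH(2)) (use Union.prems in auto)
  ultimately show ?case by auto
next
  case (Prod R1 R2)
  have wf1: "wf_ra S ar R1" and wf2: "wf_ra S ar R2" using Prod.prems by auto
  have "csem fi pi (trb S I) a (cgen ar R1 n (\<lambda>ws1 m. cgen ar R2 m (\<lambda>ws2 m'. c (ws1 @ ws2) m'))) =
        (\<exists>t1\<in>eval_ra fi pi I R1. \<exists>t2\<in>eval_ra fi pi I R2. \<Phi> (t1 @ t2))"
  proof (rule Prod.IH(1)[OF wf1 Prod.prems(2)], unfold rep_def, intro allI impI)
    fix ws1 m b
    assume a: "n \<le> m" "set ws1 \<subseteq> {..<m}" "set ws1 \<subseteq> dom b" "a \<subseteq>\<^sub>m b" "dom b \<subseteq> {..<m}"
      "length ws1 = arity ar R1"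
    show "csem fi pi (trb S I) b (cgen ar R2 m (\<lambda>ws2 m'. c (ws1 @ ws2) m')) =
       (\<exists>t2\<in>eval_ra fi pi I R2. \<Phi> (map (\<lambda>x. evalv fi b (Var x)) ws1 @ t2))"
    proof (rule Prod.IH(2)[OF wf2 a(5)], unfold rep_def, intro allI impI)
      fix ws2 m' b'
      assume a2: "m \<le> m'" "set ws2 \<subseteq> {..<m'}" "set ws2 \<subseteq> dom b'" "b \<subseteq>\<^sub>m b'" "dom b' \<subseteq> {..<m'}"
        "length ws2 = arity ar R2"
      have d: "dom b \<subseteq> dom b'" by (rule dom_mono[OF a2(4)])
      have "csem fi pi (trb S I) b' (c (ws1 @ ws2) m') = \<Phi> (map (\<lambda>x. evalv fi b' (Var x)) (ws1 @ ws2))"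
        by (rule repD[OF Prod.prems(3)]) (use a a2 d map_le_trans[OF a(4) a2(4)] in auto)
      also have "map (\<lambda>x. evalv fi b' (Var x)) (ws1 @ ws2) =
         map (\<lambda>x. evalv fi b (Var x)) ws1 @ map (\<lambda>x. evalv fi b' (Var x)) ws2"
        using val_mono[OF a2(4) a(3), of fi] by simp
      finally show "csem fi pi (trb S I) b' (c (ws1 @ ws2) m') =
         \<Phi> (map (\<lambda>x. evalv fi b (Var x)) ws1 @ map (\<lambda>x. evalv fi b' (Var x)) ws2)" .
    qed
  qed
  then show ?case by auto
next
  case (Diff R1 R2)
  have wf1: "wf_ra S ar R1" and wf2: "wf_ra S ar R2" and ar: "arity ar R1 = arity ar R2"
    using Diff.prems by auto
  have "csem fi pi (trb S I) a (cgen ar R1 n (\<lambda>ws m. cand (CNot (cgen ar R2 m (\<lambda>ws2 m'. CB (eqs ws ws2)))) (c ws m))) =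
        (\<exists>t\<in>eval_ra fi pi I R1. t \<notin> eval_ra fi pi I R2 \<and> \<Phi> t)"
  proof (rule Diff.IH(1)[OF wf1 Diff.prems(2)], unfold rep_def, intro allI impI)
    fix ws m b
    assume a: "n \<le> m" "set ws \<subseteq> {..<m}" "set ws \<subseteq> dom b" "a \<subseteq>\<^sub>m b" "dom b \<subseteq> {..<m}"
      "length ws = arity ar R1"
    have inner: "csem fi pi (trb S I) b (cgen ar R2 m (\<lambda>ws2 m'. CB (eqs ws ws2))) =
       (\<exists>t2\<in>eval_ra fi pi I R2. t2 = map (\<lambda>x. evalv fi b (Var x)) ws)"
    proof (rule Diff.IH(2)[OF wf2 a(5)], unfold rep_def, intro allI impI)
      fix ws2 m' b'
      assume a2: "m \<le> m'" "set ws2 \<subseteq> {..<m'}" "set ws2 \<subseteq> dom b'" "b \<subseteq>\<^sub>m b'" "dom b' \<subseteq> {..<m'}"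
        "length ws2 = arity ar R2"
      have h: "csem fi pi (trb S I) b' (CB (eqs ws ws2)) =
          (map (\<lambda>x. evalv fi b' (Var x)) ws = map (\<lambda>x. evalv fi b' (Var x)) ws2)"
        using evalb_eqs[of ws ws2 fi pi b'] a(6) a2(6) ar by simp
      have vm: "map (\<lambda>x. evalv fi b' (Var x)) ws = map (\<lambda>x. evalv fi b (Var x)) ws"
        by (rule val_mono[OF a2(4) a(3)])
      show "csem fi pi (trb S I) b' (CB (eqs ws ws2)) =
          (map (\<lambda>x. evalv fi b' (Var x)) ws2 = map (\<lambda>x. evalv fi b (Var x)) ws)"
        using h vm by metis
    qed
    have "csem fi pi (trb S I) b (c ws m) = \<Phi> (map (\<lambda>x. evalv fi b (Var x)) ws)"
      by (rule repD[OF Diff.prems(3)]) (use a in auto)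
    then show "csem fi pi (trb S I) b (cand (CNot (cgen ar R2 m (\<lambda>ws2 m'. CB (eqs ws ws2)))) (c ws m)) =
       (map (\<lambda>x. evalv fi b (Var x)) ws \<notin> eval_ra fi pi I R2 \<and> \<Phi> (map (\<lambda>x. evalv fi b (Var x)) ws))"
      using inner by auto
  qed
  then show ?case by auto
qed

lemma qgen_sem:
  fixes fi :: "'g \<Rightarrow> 'v list \<Rightarrow> 'v" and pi :: "'p \<Rightarrow> 'v list \<Rightarrow> bool" and I :: "'r \<Rightarrow> 'v list set"
    and R :: "('r,'g,'p,'v) ra"
  assumes fS: "finite S" and db: "db_instance S ar I"
  shows "wf_ra S ar R \<Longrightarrow> dom a \<subseteq> {..<n} \<Longrightarrow>
    rep fi (qsem fi pi (trb S I)) a n (arity ar R) c \<Psi> \<Longrightarrow>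
    qsem fi pi (trb S I) a (qgen ar R n c) = (\<Union>t\<in>eval_ra fi pi I R. \<Psi> t)"
proof (induction R arbitrary: a n c \<Psi>)
  case (Rel r)
  let ?F = "trb S I :: ('r,'g,'p,'v) gfact multiset"
  let ?ws = "[n..<n + ar r]"
  have rS: "r \<in> S" using Rel.prems by simp
  have tm: "\<And>u. (GF (Rel r) u \<in># ?F \<and> length u = ar r) \<longleftrightarrow> u \<in> I r"
    by (rule trb_mem[OF fS db rS])
  have mt: "matches fi a (relpat r ?ws) ?F = ext a n ` I r"
  proof -
    have "matches fi a (relpat r ?ws) ?F = {e'. \<exists>u. GF (Rel r) u \<in># ?F \<and> length u = ar r \<and> e' = ext a n u}"
      unfolding matches_def by (simp only: relmatch[OF Rel.prems(2)])
    also have "\<dots> = ext a n ` I r" using tm by blast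
    finally show ?thesis .
  qed
  have "qsem fi pi ?F a (qgen ar (Rel r) n c) = (\<Union>u\<in>I r. qsem fi pi ?F (ext a n u) (c ?ws (n + ar r)))"
    by (simp add: mt image_image)
  also have "\<dots> = (\<Union>u\<in>I r. \<Psi> u)"
  proof (rule SUP_cong[OF refl])
    fix u assume "u \<in> I r"
    then have "length u = ar r" using tm by blast
    then show "qsem fi pi ?F (ext a n u) (c ?ws (n + ar r)) = \<Psi> u"
      using rep_rel[OF Rel.prems(3)[simplified] Rel.prems(2)] by simp
  qed
  finally show ?case by simp
next
  case (Proj ixs R)
  have wf: "wf_ra S ar R" and ix: "\<forall>i\<in>set ixs. 1 \<le> i \<and> i \<le> arity ar R" using Proj.prems by auto
  have "qsem fi pi (trb S I) a (qgen ar R n (\<lambda>ws m. c (map (\<lambda>i. ws ! (i - 1)) ixs) m)) =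
        (\<Union>t\<in>eval_ra fi pi I R. \<Psi> (map (\<lambda>i. t ! (i - 1)) ixs))"
  proof (rule Proj.IH[OF wf Proj.prems(2)], unfold rep_def, intro allI impI)
    fix ws m b
    assume a: "n \<le> m" "set ws \<subseteq> {..<m}" "set ws \<subseteq> dom b" "a \<subseteq>\<^sub>m b" "dom b \<subseteq> {..<m}"
      "length ws = arity ar R"
    have sub: "set (map (\<lambda>i. ws ! (i - 1)) ixs) \<subseteq> set ws" by (rule proj_sub[OF ix a(6)])
    have "qsem fi pi (trb S I) b (c (map (\<lambda>i. ws ! (i - 1)) ixs) m) =
          \<Psi> (map (\<lambda>x. evalv fi b (Var x)) (map (\<lambda>i. ws ! (i - 1)) ixs))"
      by (rule repD[OF Proj.prems(3)]) (use a sub in auto)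
    also have "\<dots> = \<Psi> (map (\<lambda>i. map (\<lambda>x. evalv fi b (Var x)) ws ! (i - 1)) ixs)"
    proof -
      have pv: "map (\<lambda>x. evalv fi b (Var x)) (map (\<lambda>i. ws ! (i - 1)) ixs) =
         map (\<lambda>i. map (\<lambda>x. evalv fi b (Var x)) ws ! (i - 1)) ixs"
        by (rule proj_vals) (use ix a(6) in simp)
      show ?thesis by (simp only: pv)
    qed
    finally show "qsem fi pi (trb S I) b (c (map (\<lambda>i. ws ! (i - 1)) ixs) m) =
          \<Psi> (map (\<lambda>i. map (\<lambda>x. evalv fi b (Var x)) ws ! (i - 1)) ixs)" .
  qed
  then show ?case by (simp add: image_image)
next
  case (Sel \<phi> R)
  have wf: "wf_ra S ar R" and fv: "fvb \<phi> \<subseteq> {1..arity ar R}" using Sel.prems by auto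
  have "qsem fi pi (trb S I) a (qgen ar R n (\<lambda>ws m. QImp (CB (substb (\<lambda>i. ws ! (i - 1)) \<phi>)) (c ws m))) =
        (\<Union>t\<in>eval_ra fi pi I R. if evalb fi pi (tuple_env t) \<phi> then \<Psi> t else {})"
  proof (rule Sel.IH[OF wf Sel.prems(2)], unfold rep_def, intro allI impI)
    fix ws m b
    assume a: "n \<le> m" "set ws \<subseteq> {..<m}" "set ws \<subseteq> dom b" "a \<subseteq>\<^sub>m b" "dom b \<subseteq> {..<m}"
      "length ws = arity ar R"
    have "qsem fi pi (trb S I) b (c ws m) = \<Psi> (map (\<lambda>x. evalv fi b (Var x)) ws)"
      by (rule repD[OF Sel.prems(3)]) (use a in auto)
    moreover have "evalb fi pi b (substb (\<lambda>i. ws ! (i - 1)) \<phi>) =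
         evalb fi pi (tuple_env (map (\<lambda>x. evalv fi b (Var x)) ws)) \<phi>"
      by (rule sel_vals) (use a fv in auto)
    ultimately show "qsem fi pi (trb S I) b (QImp (CB (substb (\<lambda>i. ws ! (i - 1)) \<phi>)) (c ws m)) =
       (if evalb fi pi (tuple_env (map (\<lambda>x. evalv fi b (Var x)) ws)) \<phi> then \<Psi> (map (\<lambda>x. evalv fi b (Var x)) ws) else {})"
      by simp
  qed
  then show ?case by auto
next
  case (Union R1 R2)
  have "qsem fi pi (trb S I) a (qgen ar R1 n c) = (\<Union>t\<in>eval_ra fi pi I R1. \<Psi> t)"
    by (rule Union.IH(1)) (use Union.prems in auto)
  moreover have "qsem fi pi (trb S I) a (qgen ar R2 n c) = (\<Union>t\<in>eval_ra fi pi I R2. \<Psi> t)"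
    by (rule Union.IH(2)) (use Union.prems in auto)
  ultimately show ?case by auto
next
  case (Prod R1 R2)
  have wf1: "wf_ra S ar R1" and wf2: "wf_ra S ar R2" using Prod.prems by auto
  have "qsem fi pi (trb S I) a (qgen ar R1 n (\<lambda>ws1 m. qgen ar R2 m (\<lambda>ws2 m'. c (ws1 @ ws2) m'))) =
        (\<Union>t1\<in>eval_ra fi pi I R1. \<Union>t2\<in>eval_ra fi pi I R2. \<Psi> (t1 @ t2))"
  proof (rule Prod.IH(1)[OF wf1 Prod.prems(2)], unfold rep_def, intro allI impI)
    fix ws1 m b
    assume a: "n \<le> m" "set ws1 \<subseteq> {..<m}" "set ws1 \<subseteq> dom b" "a \<subseteq>\<^sub>m b" "dom b \<subseteq> {..<m}"
      "length ws1 = arity ar R1"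
    show "qsem fi pi (trb S I) b (qgen ar R2 m (\<lambda>ws2 m'. c (ws1 @ ws2) m')) =
       (\<Union>t2\<in>eval_ra fi pi I R2. \<Psi> (map (\<lambda>x. evalv fi b (Var x)) ws1 @ t2))"
    proof (rule Prod.IH(2)[OF wf2 a(5)], unfold rep_def, intro allI impI)
      fix ws2 m' b'
      assume a2: "m \<le> m'" "set ws2 \<subseteq> {..<m'}" "set ws2 \<subseteq> dom b'" "b \<subseteq>\<^sub>m b'" "dom b' \<subseteq> {..<m'}"
        "length ws2 = arity ar R2"
      have d: "dom b \<subseteq> dom b'" by (rule dom_mono[OF a2(4)])
      have "qsem fi pi (trb S I) b' (c (ws1 @ ws2) m') = \<Psi> (map (\<lambda>x. evalv fi b' (Var x)) (ws1 @ ws2))"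
        by (rule repD[OF Prod.prems(3)]) (use a a2 d map_le_trans[OF a(4) a2(4)] in auto)
      also have "map (\<lambda>x. evalv fi b' (Var x)) (ws1 @ ws2) =
         map (\<lambda>x. evalv fi b (Var x)) ws1 @ map (\<lambda>x. evalv fi b' (Var x)) ws2"
      proof -
        have vm: "map (\<lambda>x. evalv fi b' (Var x)) ws1 = map (\<lambda>x. evalv fi b (Var x)) ws1"
          by (rule val_mono[OF a2(4) a(3)])
        show ?thesis by (simp only: map_append vm)
      qed
      finally show "qsem fi pi (trb S I) b' (c (ws1 @ ws2) m') =
         \<Psi> (map (\<lambda>x. evalv fi b (Var x)) ws1 @ map (\<lambda>x. evalv fi b' (Var x)) ws2)" .
    qed
  qed
  then show ?case by auto
next
  case (Diff R1 R2)
  have wf1: "wf_ra S ar R1" and wf2: "wf_ra S ar R2" and ar: "arity ar R1 = arity ar R2"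
    using Diff.prems by auto
  have "qsem fi pi (trb S I) a (qgen ar R1 n (\<lambda>ws m. QImp (CNot (cgen ar R2 m (\<lambda>ws2 m'. CB (eqs ws ws2)))) (c ws m))) =
        (\<Union>t\<in>eval_ra fi pi I R1. if t \<in> eval_ra fi pi I R2 then {} else \<Psi> t)"
  proof (rule Diff.IH(1)[OF wf1 Diff.prems(2)], unfold rep_def, intro allI impI)
    fix ws m b
    assume a: "n \<le> m" "set ws \<subseteq> {..<m}" "set ws \<subseteq> dom b" "a \<subseteq>\<^sub>m b" "dom b \<subseteq> {..<m}"
      "length ws = arity ar R1"
    have inner: "csem fi pi (trb S I) b (cgen ar R2 m (\<lambda>ws2 m'. CB (eqs ws ws2))) =
       (\<exists>t2\<in>eval_ra fi pi I R2. t2 = map (\<lambda>x. evalv fi b (Var x)) ws)"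
    proof (rule cgen_sem[OF fS db wf2 a(5)], unfold rep_def, intro allI impI)
      fix ws2 m' b'
      assume a2: "m \<le> m'" "set ws2 \<subseteq> {..<m'}" "set ws2 \<subseteq> dom b'" "b \<subseteq>\<^sub>m b'" "dom b' \<subseteq> {..<m'}"
        "length ws2 = arity ar R2"
      have h: "csem fi pi (trb S I) b' (CB (eqs ws ws2)) =
          (map (\<lambda>x. evalv fi b' (Var x)) ws = map (\<lambda>x. evalv fi b' (Var x)) ws2)"
        using evalb_eqs[of ws ws2 fi pi b'] a(6) a2(6) ar by simp
      have vm: "map (\<lambda>x. evalv fi b' (Var x)) ws = map (\<lambda>x. evalv fi b (Var x)) ws"
        by (rule val_mono[OF a2(4) a(3)])
      show "csem fi pi (trb S I) b' (CB (eqs ws ws2)) =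
          (map (\<lambda>x. evalv fi b' (Var x)) ws2 = map (\<lambda>x. evalv fi b (Var x)) ws)"
        using h vm by metis
    qed
    have "qsem fi pi (trb S I) b (c ws m) = \<Psi> (map (\<lambda>x. evalv fi b (Var x)) ws)"
      by (rule repD[OF Diff.prems(3)]) (use a in auto)
    then show "qsem fi pi (trb S I) b (QImp (CNot (cgen ar R2 m (\<lambda>ws2 m'. CB (eqs ws ws2)))) (c ws m)) =
       (if map (\<lambda>x. evalv fi b (Var x)) ws \<in> eval_ra fi pi I R2 then {} else \<Psi> (map (\<lambda>x. evalv fi b (Var x)) ws))"
      using inner by auto
  qed
  then show ?case by auto
qed

lemma ans_irred: "\<not> qstep fi pi (Ans M) u"
  by (auto elim: qstep.cases)

theorem theorem5:
  fixes S :: "'r set" and ar :: "'r \<Rightarrow> nat"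
    and fi :: "'g \<Rightarrow> 'v list \<Rightarrow> 'v" and pi :: "'p \<Rightarrow> 'v list \<Rightarrow> bool"
    and R :: "('r,'g,'p,'v) ra"
  assumes "finite S"
    and "wf_ra S ar R"
  shows "\<exists>Q :: ('r,'g,'p,'v) query. closed_query Q \<and> det_q fi Q \<and>
           (\<forall>(I :: 'r \<Rightarrow> 'v list set) (t :: 'v list). db_instance S ar I \<longrightarrow>
              ((\<exists>F. reduces_nf fi pi (init_q Q (trb S I)) (Ans (F + {#GF R t#})))
               \<longleftrightarrow> t \<in> eval_ra fi pi I R))"
proof -
  define fin :: "nat list \<Rightarrow> nat \<Rightarrow> ('r,'g,'p,'v) query" where
    "fin = (\<lambda>ws m. QFact (FT R (map Var ws)))"
  define Q where "Q = qgen ar R 0 fin"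
  have cl: "closed_query Q"
    unfolding closed_query_def Q_def
    by (rule qgen_closed[OF assms(2)]) (auto simp: fin_def)
  have dq: "det_q fi Q" unfolding Q_def by (rule qgen_det) (simp add: fin_def)
  have sem: "qsem fi pi (trb S I) Map.empty Q = (\<Union>t\<in>eval_ra fi pi I R. {GF R t})"
    if db: "db_instance S ar I" for I :: "'r \<Rightarrow> 'v list set"
    unfolding Q_def
  proof (rule qgen_sem[OF assms(1) db assms(2)], simp, unfold rep_def, intro allI impI)
    fix ws m b
    show "qsem fi pi (trb S I) b (fin ws m) = {GF R (map (\<lambda>x. evalv fi b (Var x)) ws)}"
      by (simp add: fin_def comp_def)
  qed
  show ?thesis
  proof (intro exI[of _ Q] conjI cl dq allI impI)
    fix I :: "'r \<Rightarrow> 'v list set" and t :: "'v list"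
    assume db: "db_instance S ar I"
    show "(\<exists>F. reduces_nf fi pi (init_q Q (trb S I)) (Ans (F + {#GF R t#}))) \<longleftrightarrow> t \<in> eval_ra fi pi I R"
    proof
      assume "\<exists>F. reduces_nf fi pi (init_q Q (trb S I)) (Ans (F + {#GF R t#}))"
      then obtain F where "reduces_nf fi pi (init_q Q (trb S I)) (Ans (F + {#GF R t#}))" by blast
      then have st: "(qstep fi pi)\<^sup>*\<^sup>* (QS (trb S I) {#} [QEv Map.empty Q]) (Ans (F + {#GF R t#}))"
        by (simp add: reduces_nf_def init_q_def)
      have "wfq fi (QS (trb S I) {#} [QEv Map.empty Q])" using dq by simp
      then have "stsem fi pi (Ans (F + {#GF R t#})) \<subseteq> stsem fi pi (QS (trb S I) {#} [QEv Map.empty Q])"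
        using qsteps_inv[OF st] by blast
      then have "GF R t \<in> qsem fi pi (trb S I) Map.empty Q" by simp
      then show "t \<in> eval_ra fi pi I R" using sem[OF db] by auto
    next
      assume t: "t \<in> eval_ra fi pi I R"
      obtain M where st: "(qstep fi pi)\<^sup>*\<^sup>* (QS (trb S I) {#} [QEv Map.empty Q]) (QS (trb S I) ({#} + M) [])"
        and M: "qsem fi pi (trb S I) Map.empty Q \<subseteq> set_mset M"
        using query_complete[OF dq, of pi "trb S I" "{#}" Map.empty "[]"] by blast
      have "(qstep fi pi)\<^sup>*\<^sup>* (QS (trb S I) {#} [QEv Map.empty Q]) (Ans M)"
        using rtranclp.rtrancl_into_rtrancl[OF st q_done] by simp
      moreover have "GF R t \<in># M" using M sem[OF db] t by auto
      then have "M = (M - {#GF R t#}) + {#GF R t#}" by simp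
      ultimately have "reduces_nf fi pi (init_q Q (trb S I)) (Ans ((M - {#GF R t#}) + {#GF R t#}))"
        unfolding reduces_nf_def init_q_def using ans_irred by metis
      then show "\<exists>F. reduces_nf fi pi (init_q Q (trb S I)) (Ans (F + {#GF R t#}))" by blast
    qed
  qed
qed

end
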